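(* Assume conditions (A1)–(A7) below hold. Then $\gamma_n\|\hat Q_\kappa^{-1}Z_\kappa'\bar U/n\|=O_p(\kappa^{1/2}/n^{1/2})$ as $n\to\infty$ (the left side being interpreted as $0$ when $\gamma_n=0$).
   Context: Model: $d\ge2$ integer; $(Y,X)$ random with $X=(X^1,\dots,X^d)$; sample $\{(Y_i,X_i)\}_{i=1}^n$. $F$ known, $\mu$ constant, $m_j:[-1,1]\to\mathbb R$ with $\int_{-1}^1m_j=0$, $m(x)=\sum_jm_j(x^j)$. $\mathcal X=[-1,1]^d$, $U=Y-F[\mu+m(X)]$, $U_i=Y_i-F[\mu+m(X_i)]$, $V(x)=\mathrm{Var}(U\mid X=x)$. $\|A\|=[\mathrm{trace}(A'A)]^{1/2}$. Basis $\{p_k\}$ on $[-1,1]$ with $m_j=\sum_k\theta_{jk}p_k$; $d(\kappa)=\kappa d+1$; $P_\kappa(x)=[1,p_1(x^1),\dots,p_\kappa(x^1),\dots,p_1(x^d),\dots,p_\kappa(x^d)]'$; $\theta_\kappa=(\mu,\theta_{11},\dots,\theta_{d\kappa})'$; $\zeta_\kappa=\sup_{\mathcal X}\|P_\kappa\|$; $Q_\kappa=\mathbf E\{F'[\mu+m(X)]^2P_\kappa(X)P_\kappa(X)'\}$ (entries $Q_{\kappa,ij}$, smallest eigenvalue $\lambda_{\kappa,\min}$); $\Psi_\kappa=Q_\kappa^{-1}\mathbf E\{F'[\mu+m(X)]^2V(X)P_\kappa P_\kappa'\}Q_\kappa^{-1}$; $\Theta_\kappa=[-C_\theta,C_\theta]^{d(\kappa)}$.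 $Z_{\kappa i}=F'[\mu+m(X_i)]P_\kappa(X_i)$, $Z_\kappa$ is the $n\times d(\kappa)$ matrix with $i$th row $Z_{\kappa i}'$, $\hat Q_\kappa=n^{-1}\sum_iZ_{\kappa i}Z_{\kappa i}'$, $\bar U=(U_1,\dots,U_n)'$, and $\gamma_n$ is the indicator that the smallest eigenvalue of $\hat Q_\kappa$ is at least $c_\lambda/2$. Assumptions: (A1) data i.i.d., $\mathbf E(Y\mid X=x)=F[\mu+m(x)]$ a.e. (A2) support of $X$ is $\mathcal X$; density $f_X$ bounded, bounded away from zero, twice continuously differentiable; $0<c_V\le V\le C_V<\infty$; $\mathbf E|U|^j\le C_U^{j-2}j!\mathbf E(U^2)<\infty$, $j\ge2$. (A3) $|m_j|\le C_m$, $m_j\in C^2[-1,1]$; on $I=[\mu-C_md,\mu+C_md]$: $F\le C_{F1}$, $0<c_{F2}\le F'\le C_{F2}$, $F\in C^2$, $F''$ Lipschitz. (A4) $|Q_{\kappa,ij}|\le C_Q$, $\lambda_{\kappa,\min}>c_\lambda>0$; largest eigenvalue of $\Psi_\kappa$ bounded. (A5) $\int p_k=0$, $\int p_jp_k=\delta_{jk}$; $\zeta_\kappa\ge c_\kappa>0$ for large $\kappa$; $\zeta_\kappa=O(\kappa^{1/2})$; some $\theta_{\kappa0}\in\Theta_\kappa$ has $\sup_{\mathcal X}|\mu+m-P_\kappa'\theta_{\kappa0}|=O(\kappa^{-2})$; $\theta_\kappa$ interior to $\Theta_\kappa$. (A6) $\kappa=C_\kappa n^{4/15+\nu}$, $0<\nu<1/30$;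 $h=C_hn^{-1/5}$. (A7) the kernel $K$ is a bounded continuous symmetric probability density on $[-1,1]$. *)

theory Defs
  imports "HOL-Probability.Probability" "HOL-Library.Landau_Symbols"
    "Jordan_Normal_Form.Char_Poly" "Jordan_Normal_Form.Gauss_Jordan_Elimination"
begin

text \<open>Vectors/matrices of varying dimension d(kappa) are Jordan_Normal_Form vectors/matrices
  (types real Matrix.vec, real mat).  Points of R^d are elements of real^'d (Cartesian type),
  with d = CARD('d).\<close>

text \<open>A fixed enumeration of the d coordinates, 0,...,d-1; used only to lay out P_kappa(x).\<close>
definition coord :: "nat \<Rightarrow> 'd::finite" where
  "coord = (SOME f. bij_betw f {..<CARD('d)} (UNIV :: 'd set))"

definition cube :: "(real^'d::finite) set" where
  "cube = cbox (- 1) 1"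

text \<open>P_kappa(x) = [1, p_1(x^1),...,p_kappa(x^1),...,p_1(x^d),...,p_kappa(x^d)]'\<close>
definition Pvec :: "(nat \<Rightarrow> real \<Rightarrow> real) \<Rightarrow> nat \<Rightarrow> real^'d::finite \<Rightarrow> real Matrix.vec" where
  "Pvec p \<kappa> x = Matrix.vec (\<kappa> * CARD('d) + 1)
     (\<lambda>i. if i = 0 then 1 else p ((i - 1) mod \<kappa> + 1) (vec_nth x (coord ((i - 1) div \<kappa>))))"

definition madd :: "('d::finite \<Rightarrow> real \<Rightarrow> real) \<Rightarrow> real^'d \<Rightarrow> real" where
  "madd mj x = (\<Sum>j\<in>UNIV. mj j (vec_nth x j))"

definition vnorm :: "real Matrix.vec \<Rightarrow> real" where
  "vnorm v = sqrt (\<Sum>i<dim_vec v. (v $ i)^2)"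

definition min_eig :: "real mat \<Rightarrow> real" where
  "min_eig A = Min {e. eigenvalue A e}"

definition max_eig :: "real mat \<Rightarrow> real" where
  "max_eig A = Max {e. eigenvalue A e}"

definition zeta :: "(nat \<Rightarrow> real \<Rightarrow> real) \<Rightarrow> nat \<Rightarrow> 'd::finite itself \<Rightarrow> real" where
  "zeta p \<kappa> _ = (SUP x\<in>(cube :: (real^'d) set). vnorm (Pvec p \<kappa> x))"

definition Qmat :: "'a measure \<Rightarrow> ('a \<Rightarrow> real^'d::finite) \<Rightarrow> (real \<Rightarrow> real) \<Rightarrow> real
     \<Rightarrow> ('d \<Rightarrow> real \<Rightarrow> real) \<Rightarrow> (nat \<Rightarrow> real \<Rightarrow> real) \<Rightarrow> nat \<Rightarrow> real mat" where
  "Qmat M X F' \<mu> mj p \<kappa> = mat (\<kappa> * CARD('d) + 1) (\<kappa> * CARD('d) + 1)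
     (\<lambda>(a, b). \<integral>\<omega>. (F' (\<mu> + madd mj (X \<omega>)))^2 * (Pvec p \<kappa> (X \<omega>) $ a) * (Pvec p \<kappa> (X \<omega>) $ b) \<partial>M)"

definition Psimat :: "'a measure \<Rightarrow> ('a \<Rightarrow> real^'d::finite) \<Rightarrow> (real \<Rightarrow> real) \<Rightarrow> real
     \<Rightarrow> ('d \<Rightarrow> real \<Rightarrow> real) \<Rightarrow> (nat \<Rightarrow> real \<Rightarrow> real) \<Rightarrow> (real^'d \<Rightarrow> real) \<Rightarrow> nat \<Rightarrow> real mat" where
  "Psimat M X F' \<mu> mj p V \<kappa> =
     (let Qi = the (mat_inverse (Qmat M X F' \<mu> mj p \<kappa>));
          W = mat (\<kappa> * CARD('d) + 1) (\<kappa> * CARD('d) + 1)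
            (\<lambda>(a, b). \<integral>\<omega>. (F' (\<mu> + madd mj (X \<omega>)))^2 * V (X \<omega>)
                 * (Pvec p \<kappa> (X \<omega>) $ a) * (Pvec p \<kappa> (X \<omega>) $ b) \<partial>M)
      in Qi * W * Qi)"

text \<open>The n x d(kappa) matrix Z_kappa with i-th row Z_{kappa i}' = F'[mu+m(X_i)] P_kappa(X_i)'
  (sample indexed by i = 0,...,n-1).\<close>
definition Zmat :: "(real \<Rightarrow> real) \<Rightarrow> real \<Rightarrow> ('d::finite \<Rightarrow> real \<Rightarrow> real) \<Rightarrow> (nat \<Rightarrow> real \<Rightarrow> real)
     \<Rightarrow> nat \<Rightarrow> (nat \<Rightarrow> 'a \<Rightarrow> real^'d) \<Rightarrow> nat \<Rightarrow> 'a \<Rightarrow> real mat" where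
  "Zmat F' \<mu> mj p \<kappa> X n \<omega> = mat n (\<kappa> * CARD('d) + 1)
     (\<lambda>(i, a). F' (\<mu> + madd mj (X i \<omega>)) * (Pvec p \<kappa> (X i \<omega>) $ a))"

definition Qhat :: "(real \<Rightarrow> real) \<Rightarrow> real \<Rightarrow> ('d::finite \<Rightarrow> real \<Rightarrow> real) \<Rightarrow> (nat \<Rightarrow> real \<Rightarrow> real)
     \<Rightarrow> nat \<Rightarrow> (nat \<Rightarrow> 'a \<Rightarrow> real^'d) \<Rightarrow> nat \<Rightarrow> 'a \<Rightarrow> real mat" where
  "Qhat F' \<mu> mj p \<kappa> X n \<omega> =
     (1 / real n) \<cdot>\<^sub>m (transpose_mat (Zmat F' \<mu> mj p \<kappa> X n \<omega>) * Zmat F' \<mu> mj p \<kappa> X n \<omega>)"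

definition Ubar :: "(real \<Rightarrow> real) \<Rightarrow> real \<Rightarrow> ('d::finite \<Rightarrow> real \<Rightarrow> real)
     \<Rightarrow> (nat \<Rightarrow> 'a \<Rightarrow> real) \<Rightarrow> (nat \<Rightarrow> 'a \<Rightarrow> real^'d) \<Rightarrow> nat \<Rightarrow> 'a \<Rightarrow> real Matrix.vec" where
  "Ubar F \<mu> mj Y X n \<omega> = Matrix.vec n (\<lambda>i. Y i \<omega> - F (\<mu> + madd mj (X i \<omega>)))"

text \<open>Stochastic order: T_n = O_p(a_n).  Stated with outer probability so that it
  does not depend on measurability of the events.\<close>
definition bigOp :: "'a measure \<Rightarrow> (nat \<Rightarrow> 'a \<Rightarrow> real) \<Rightarrow> (nat \<Rightarrow> real) \<Rightarrow> bool" where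
  "bigOp M T a \<longleftrightarrow>
     (\<forall>\<epsilon>>0. \<exists>C N. \<forall>n\<ge>N. \<exists>A\<in>sets M.
        {\<omega>\<in>space M. \<bar>T n \<omega>\<bar> > C * a n} \<subseteq> A \<and> measure M A < \<epsilon>)"

end

theory Submission
  imports Defs
begin



lemma compact_sphere_fun:
  "compact {h::nat\<Rightarrow>real. (\<forall>i. i \<ge> n \<longrightarrow> h i = 0) \<and> (\<Sum>i<n. (h i)^2) = 1}"
proof -
  let ?B = "PiE UNIV (\<lambda>i::nat. if i < n then {-1..1::real} else {0})"
  have "compactin (product_topology (\<lambda>_. euclidean) UNIV) ?B"
    by (subst compactin_PiE) auto
  hence cB: "compact ?B"
    by (simp add: euclidean_product_topology compactin_euclidean_iff)
  have eq: "{h::nat\<Rightarrow>real. (\<forall>i. i \<ge> n \<longrightarrow> h i = 0) \<and> (\<Sum>i<n. (h i)^2) = 1}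
     = (\<Inter>i\<in>{n..}. {h. h i = 0}) \<inter> {h. (\<Sum>i<n. (h i)^2) = 1}" by auto
  have cl: "closed {h::nat\<Rightarrow>real. (\<forall>i. i \<ge> n \<longrightarrow> h i = 0) \<and> (\<Sum>i<n. (h i)^2) = 1}"
    unfolding eq
    by (intro closed_Int closed_INT ballI closed_Collect_eq continuous_on_product_coordinates continuous_on_const
       continuous_intros continuous_on_product_then_coordinatewise continuous_on_id)
  have sub: "{h::nat\<Rightarrow>real. (\<forall>i. i \<ge> n \<longrightarrow> h i = 0) \<and> (\<Sum>i<n. (h i)^2) = 1} \<subseteq> ?B"
  proof
    fix h :: "nat \<Rightarrow> real" assume h: "h \<in> {h. (\<forall>i. i \<ge> n \<longrightarrow> h i = 0) \<and> (\<Sum>i<n. (h i)^2) = 1}"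
    show "h \<in> ?B"
    proof (unfold PiE_iff, intro conjI ballI)
      fix i :: nat assume "i \<in> UNIV"
      show "h i \<in> (if i < n then {-1..1} else {0})"
      proof (cases "i < n")
        case True
        have "(h i)^2 \<le> (\<Sum>j<n. (h j)^2)"
          using True by (intro member_le_sum) auto
        hence "(h i)^2 \<le> 1" using h by auto
        hence "\<bar>h i\<bar> \<le> 1" by (simp add: abs_square_le_1)
        then show ?thesis using True by auto
      next
        case False then show ?thesis using h by auto
      qed
    qed auto
  qed
  show ?thesis using compact_Int_closed[OF cB cl] sub by (simp add: Int_absorb1)
qed

lemma quad_sum:
  fixes A :: "real mat"
  assumes A: "A \<in> carrier_mat n n" and w: "w \<in> carrier_vec n"
  shows "scalar_prod w (A *\<^sub>v w) = (\<Sum>i<n. w$i * (\<Sum>j<n. A$$(i,j) * w$j))"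
  using A w by (simp add: scalar_prod_def mult_mat_vec_def row_def atLeast0LessThan)

lemma sq_sum:
  fixes w :: "real vec"
  assumes w: "w \<in> carrier_vec n"
  shows "scalar_prod w w = (\<Sum>i<n. (w$i)^2)"
  using w by (simp add: scalar_prod_def atLeast0LessThan power2_eq_square)

lemma rayleigh_min:
  fixes A :: "real mat"
  assumes A: "A \<in> carrier_mat n n" and n: "n > 0"
  shows "\<exists>w0 \<in> carrier_vec n. scalar_prod w0 w0 = 1 \<and>
     (\<forall>w \<in> carrier_vec n. scalar_prod w w = 1 \<longrightarrow> scalar_prod w0 (A *\<^sub>v w0) \<le> scalar_prod w (A *\<^sub>v w))"
proof -
  define K where "K = {h::nat\<Rightarrow>real. (\<forall>i. i \<ge> n \<longrightarrow> h i = 0) \<and> (\<Sum>i<n. (h i)^2) = 1}"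
  define g where "g = (\<lambda>h::nat\<Rightarrow>real. \<Sum>i<n. h i * (\<Sum>j<n. A$$(i,j) * h j))"
  have cK: "compact K" unfolding K_def by (rule compact_sphere_fun)
  have neK: "K \<noteq> {}"
  proof -
    have "(\<lambda>i. if i = 0 then 1 else 0::real) \<in> K" using n unfolding K_def
      by (auto simp: power2_eq_square if_distrib sum.If_cases Int_absorb1 cong: if_cong)
    thus ?thesis by auto
  qed
  have cg: "continuous_on K g" unfolding g_def
    by (intro continuous_intros continuous_on_product_then_coordinatewise continuous_on_id)
  obtain h0 where h0: "h0 \<in> K" and min: "\<And>h. h \<in> K \<Longrightarrow> g h0 \<le> g h"
    using continuous_attains_inf[OF cK neK cg] by blast
  define w0 where "w0 = vec n h0"
  have w0c: "w0 \<in> carrier_vec n" unfolding w0_def by simp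
  have gw0: "scalar_prod w0 (A *\<^sub>v w0) = g h0"
    by (subst quad_sum[OF A w0c]) (simp add: g_def w0_def)
  have nw0: "scalar_prod w0 w0 = 1"
    by (subst sq_sum[OF w0c]) (use h0 in \<open>simp add: w0_def K_def\<close>)
  show ?thesis
  proof (intro bexI[OF _ w0c] conjI nw0 ballI impI)
    fix w :: "real vec" assume w: "w \<in> carrier_vec n" and nw: "scalar_prod w w = 1"
    define h where "h = (\<lambda>i. if i < n then w$i else 0)"
    have hK: "h \<in> K" unfolding K_def h_def using nw unfolding sq_sum[OF w] by auto
    have "g h = scalar_prod w (A *\<^sub>v w)"
      by (subst quad_sum[OF A w]) (simp add: g_def h_def)
    thus "scalar_prod w0 (A *\<^sub>v w0) \<le> scalar_prod w (A *\<^sub>v w)"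
      using min[OF hK] gw0 by simp
  qed
qed

lemma bil_swap:
  fixes a b :: "nat \<Rightarrow> real" and M :: "nat \<Rightarrow> nat \<Rightarrow> real"
  assumes sym: "\<And>i j. i < n \<Longrightarrow> j < n \<Longrightarrow> M i j = M j i"
  shows "(\<Sum>i<n. b i * (\<Sum>j<n. M i j * a j)) = (\<Sum>i<n. a i * (\<Sum>j<n. M i j * b j))"
proof -
  have "(\<Sum>i<n. b i * (\<Sum>j<n. M i j * a j)) = (\<Sum>i<n. \<Sum>j<n. b i * M i j * a j)"
    by (simp add: sum_distrib_left mult.assoc)
  also have "\<dots> = (\<Sum>j<n. \<Sum>i<n. b i * M i j * a j)" by (rule sum.swap)
  also have "\<dots> = (\<Sum>j<n. \<Sum>i<n. a j * M j i * b i)"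
    by (intro sum.cong refl) (simp add: sym)
  also have "\<dots> = (\<Sum>i<n. a i * (\<Sum>j<n. M i j * b j))"
    by (simp add: sum_distrib_left mult.assoc)
  finally show ?thesis .
qed

lemma quad_expand:
  fixes a b :: "nat \<Rightarrow> real" and M :: "nat \<Rightarrow> nat \<Rightarrow> real"
  assumes sym: "\<And>i j. i < n \<Longrightarrow> j < n \<Longrightarrow> M i j = M j i"
  shows "(\<Sum>i<n. (a i + t*b i) * (\<Sum>j<n. M i j * (a j + t * b j)))
     = (\<Sum>i<n. a i * (\<Sum>j<n. M i j * a j)) + 2*t*(\<Sum>i<n. a i * (\<Sum>j<n. M i j * b j))
       + t^2 * (\<Sum>i<n. b i * (\<Sum>j<n. M i j * b j))"
proof -
  have "(\<Sum>i<n. (a i + t*b i) * (\<Sum>j<n. M i j * (a j + t * b j)))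
     = (\<Sum>i<n. a i * (\<Sum>j<n. M i j * a j)) + t*(\<Sum>i<n. a i * (\<Sum>j<n. M i j * b j))
       + t*(\<Sum>i<n. b i * (\<Sum>j<n. M i j * a j)) + t^2 * (\<Sum>i<n. b i * (\<Sum>j<n. M i j * b j))"
    by (simp add: algebra_simps sum.distrib sum_distrib_left power2_eq_square)
  then show ?thesis using bil_swap[of n M a b, OF sym] by simp
qed

lemma sq_expand:
  fixes a b :: "nat \<Rightarrow> real"
  shows "(\<Sum>i<n. (a i + t*b i)^2) = (\<Sum>i<n. (a i)^2) + 2*t*(\<Sum>i<n. a i * b i) + t^2 * (\<Sum>i<n. (b i)^2)"
  by (simp add: algebra_simps sum.distrib sum_distrib_left power2_eq_square)

lemma lin_quad_nonneg:
  fixes c d :: real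
  assumes "\<And>t. 2*t*c + t^2*d \<ge> 0"
  shows "c = 0"
proof (rule ccontr)
  assume c: "c \<noteq> 0"
  define e where "e = \<bar>d\<bar>"
  have e0: "e \<ge> 0" unfolding e_def by simp
  define t where "t = - c / (e + 1)"
  have pos: "e + 1 > 0" using e0 by simp
  have "2*t*c + t^2*d \<le> 2*t*c + t^2*e" unfolding e_def by (intro add_left_mono mult_left_mono) auto
  also have "\<dots> = (c^2/(e+1)) * (-2 + e/(e+1))"
  proof -
    have D: "(e+1)*(e+1) \<noteq> 0" using pos by simp
    show ?thesis unfolding t_def power2_eq_square using pos D
      by (simp add: divide_simps) (simp add: algebra_simps)
  qed
  also have "\<dots> < 0"
  proof (rule mult_pos_neg)
    show "0 < c^2/(e+1)" using c pos by simp
    have "e/(e+1) < 1" using pos by simp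
    thus "-2 + e/(e+1) < 0" by simp
  qed
  finally show False using assms[of t] by simp
qed

lemma eig_finite:
  fixes A :: "real mat"
  assumes A: "A \<in> carrier_mat n n"
  shows "finite {e. eigenvalue A e}"
proof -
  have "char_poly A \<noteq> 0" using degree_monic_char_poly[OF A] by auto
  hence "finite {e. poly (char_poly A) e = 0}" by (rule poly_roots_finite)
  thus ?thesis using eigenvalue_root_char_poly[OF A] by simp
qed

lemma rayleigh_eig:
  fixes A :: "real mat"
  assumes A: "A \<in> carrier_mat n n" and n: "n > 0"
    and sym: "\<And>i j. i < n \<Longrightarrow> j < n \<Longrightarrow> A$$(i,j) = A$$(j,i)"
    and w: "w \<in> carrier_vec n"
  shows "scalar_prod w (A *\<^sub>v w) \<ge> min_eig A * scalar_prod w w"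
proof -
  obtain w0 where w0c: "w0 \<in> carrier_vec n" and nw0: "scalar_prod w0 w0 = 1"
    and mn: "\<And>w. w \<in> carrier_vec n \<Longrightarrow> scalar_prod w w = 1 \<Longrightarrow> scalar_prod w0 (A *\<^sub>v w0) \<le> scalar_prod w (A *\<^sub>v w)"
    using rayleigh_min[OF A n] by blast
  define \<mu> where "\<mu> = scalar_prod w0 (A *\<^sub>v w0)"
  define M where "M = (\<lambda>i j. A$$(i,j))"
  have symM: "\<And>i j. i < n \<Longrightarrow> j < n \<Longrightarrow> M i j = M j i" unfolding M_def using sym by simp
  define Qf where "Qf = (\<lambda>a::nat\<Rightarrow>real. \<Sum>i<n. a i * (\<Sum>j<n. M i j * a j))"
  have Qv: "\<And>x. x \<in> carrier_vec n \<Longrightarrow> scalar_prod x (A *\<^sub>v x) = Qf (\<lambda>i. x$i)"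
    unfolding Qf_def M_def by (rule quad_sum[OF A])
  have hom: "scalar_prod x (A *\<^sub>v x) \<ge> \<mu> * scalar_prod x x" if x: "x \<in> carrier_vec n" for x
  proof (cases "scalar_prod x x = 0")
    case True
    hence "(\<Sum>i<n. (x$i)^2) = 0" using sq_sum[OF x] by simp
    hence "\<forall>i\<in>{..<n}. (x$i)^2 = 0" by (subst sum_nonneg_eq_0_iff[symmetric]) auto
    hence "x = 0\<^sub>v n" using x by (intro eq_vecI) auto
    then show ?thesis using A by simp
  next
    case False
    define s where "s = scalar_prod x x"
    have "s \<ge> 0" unfolding s_def sq_sum[OF x] by (intro sum_nonneg) auto
    hence s0: "s > 0" using False unfolding s_def by simp
    define y where "y = (1/sqrt s) \<cdot>\<^sub>v x"
    have yc: "y \<in> carrier_vec n" unfolding y_def using x by simp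
    have "scalar_prod y y = (1/sqrt s)*(1/sqrt s) * s"
      unfolding y_def s_def using x by simp
    also have "\<dots> = 1" using s0 by (simp add: real_sqrt_mult[symmetric])
    finally have ny: "scalar_prod y y = 1" .
    have "scalar_prod y (A *\<^sub>v y) = (1/sqrt s)*(1/sqrt s) * scalar_prod x (A *\<^sub>v x)"
      unfolding y_def using x A by (simp add: mult_mat_vec)
    also have "\<dots> = scalar_prod x (A *\<^sub>v x) / s" using s0 by (simp add: real_sqrt_mult[symmetric])
    finally have "\<mu> \<le> scalar_prod x (A *\<^sub>v x) / s" using mn[OF yc ny] unfolding \<mu>_def by simp
    then show ?thesis using s0 unfolding s_def by (simp add: field_simps)
  qed
  define u where "u = A *\<^sub>v w0 - \<mu> \<cdot>\<^sub>v w0"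
  have uc: "u \<in> carrier_vec n" unfolding u_def using A w0c by simp
  define a where "a = (\<lambda>i. w0$i)"
  define b where "b = (\<lambda>i. u$i)"
  have Av: "\<And>i. i < n \<Longrightarrow> (\<Sum>j<n. M i j * a j) = b i + \<mu> * a i"
    unfolding a_def b_def u_def M_def using A w0c
    by (simp add: mult_mat_vec_def scalar_prod_def row_def atLeast0LessThan)
  have Qa: "Qf a = \<mu>" unfolding \<mu>_def a_def using Qv[OF w0c] by simp
  have Sa: "(\<Sum>i<n. (a i)^2) = 1" using nw0 sq_sum[OF w0c] unfolding a_def by simp
  have ineq: "2*t*((\<Sum>i<n. a i * (\<Sum>j<n. M i j * b j)) - \<mu> * (\<Sum>i<n. a i * b i))
      + t^2*(Qf b - \<mu> * (\<Sum>i<n. (b i)^2)) \<ge> 0" for t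
  proof -
    define x where "x = w0 + t \<cdot>\<^sub>v u"
    have xc: "x \<in> carrier_vec n" unfolding x_def using w0c uc by simp
    have xi: "(\<lambda>i. x$i) = (\<lambda>i. if i < n then a i + t * b i else x$i)"
      unfolding x_def a_def b_def using w0c uc by auto
    have "Qf (\<lambda>i. x$i) = Qf (\<lambda>i. a i + t * b i)"
      unfolding Qf_def by (intro sum.cong refl) (simp add: xi)
    also have "\<dots> = Qf a + 2*t*(\<Sum>i<n. a i * (\<Sum>j<n. M i j * b j)) + t^2 * Qf b"
      unfolding Qf_def by (rule quad_expand[OF symM])
    finally have q1: "scalar_prod x (A *\<^sub>v x) = Qf a + 2*t*(\<Sum>i<n. a i * (\<Sum>j<n. M i j * b j)) + t^2 * Qf b"
      using Qv[OF xc] by simp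
    have "scalar_prod x x = (\<Sum>i<n. (a i + t * b i)^2)"
      unfolding sq_sum[OF xc] by (intro sum.cong refl) (simp add: xi)
    also have "\<dots> = (\<Sum>i<n. (a i)^2) + 2*t*(\<Sum>i<n. a i * b i) + t^2 * (\<Sum>i<n. (b i)^2)"
      by (rule sq_expand)
    finally have q2: "scalar_prod x x = 1 + 2*t*(\<Sum>i<n. a i * b i) + t^2 * (\<Sum>i<n. (b i)^2)"
      using Sa by simp
    from hom[OF xc] q1 q2 Qa show ?thesis by (simp add: algebra_simps)
  qed
  have c0: "(\<Sum>i<n. a i * (\<Sum>j<n. M i j * b j)) - \<mu> * (\<Sum>i<n. a i * b i) = 0"
    by (rule lin_quad_nonneg[OF ineq])
  have "(\<Sum>i<n. a i * (\<Sum>j<n. M i j * b j)) = (\<Sum>i<n. b i * (\<Sum>j<n. M i j * a j))"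
    by (rule bil_swap[OF symM, symmetric])
  also have "\<dots> = (\<Sum>i<n. b i * (b i + \<mu> * a i))" by (intro sum.cong refl) (simp add: Av)
  also have "\<dots> = (\<Sum>i<n. (b i)^2) + \<mu> * (\<Sum>i<n. a i * b i)"
    by (simp add: algebra_simps sum.distrib sum_distrib_left power2_eq_square)
  finally have "(\<Sum>i<n. (b i)^2) = 0" using c0 by simp
  hence "\<forall>i\<in>{..<n}. (b i)^2 = 0" by (subst sum_nonneg_eq_0_iff[symmetric]) auto
  hence u0: "u = 0\<^sub>v n" using uc unfolding b_def by (intro eq_vecI) auto
  have Aw0: "A *\<^sub>v w0 = \<mu> \<cdot>\<^sub>v w0"
  proof (rule eq_vecI)
    fix i assume i: "i < dim_vec (\<mu> \<cdot>\<^sub>v w0)"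
    have "u $ i = 0" using u0 i w0c by simp
    thus "(A *\<^sub>v w0) $ i = (\<mu> \<cdot>\<^sub>v w0) $ i" unfolding u_def using i w0c A by simp
  qed (use A w0c in simp)
  have w0nz: "w0 \<noteq> 0\<^sub>v n" using nw0 by auto
  have "eigenvalue A \<mu>" unfolding eigenvalue_def eigenvector_def
    using w0c w0nz Aw0 A by auto
  hence "min_eig A \<le> \<mu>" unfolding min_eig_def using eig_finite[OF A] by (intro Min_le) auto
  moreover have "scalar_prod w w \<ge> 0" unfolding sq_sum[OF w] by (intro sum_nonneg) auto
  ultimately have "min_eig A * scalar_prod w w \<le> \<mu> * scalar_prod w w" by (intro mult_right_mono)
  with hom[OF w] show ?thesis by simp
qed


lemma vnorm_sp: "v \<in> carrier_vec n \<Longrightarrow> vnorm v = sqrt (scalar_prod v v)"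
  unfolding vnorm_def using sq_sum[of v n] by simp

lemma sp_amgm:
  fixes u v :: "real vec"
  assumes u: "u \<in> carrier_vec n" and v: "v \<in> carrier_vec n" and l: "l > 0"
  shows "scalar_prod u v \<le> (l/2) * scalar_prod u u + scalar_prod v v / (2*l)"
proof -
  have "scalar_prod u v = (\<Sum>i<n. u$i * v$i)" using u v by (simp add: scalar_prod_def atLeast0LessThan)
  also have "\<dots> \<le> (\<Sum>i<n. (l/2) * (u$i)^2 + (v$i)^2/(2*l))"
  proof (intro sum_mono)
    fix i
    have "0 \<le> (l * u$i - v$i)^2" by simp
    hence "2*l*(u$i * v$i) \<le> 2*l*((l/2) * (u$i)^2 + (v$i)^2/(2*l))"
      using l by (simp add: power2_eq_square algebra_simps)
    thus "u$i * v$i \<le> (l/2) * (u$i)^2 + (v$i)^2/(2*l)" using l by simp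
  qed
  also have "\<dots> = (l/2) * scalar_prod u u + scalar_prod v v / (2*l)"
    using sq_sum[OF u] sq_sum[OF v] by (simp add: sum.distrib sum_distrib_left sum_divide_distrib)
  finally show ?thesis .
qed

lemma inv_bound:
  fixes A :: "real mat"
  assumes A: "A \<in> carrier_mat n n" and n: "n > 0"
    and sym: "\<And>i j. i < n \<Longrightarrow> j < n \<Longrightarrow> A$$(i,j) = A$$(j,i)"
    and l: "l > 0" and me: "min_eig A \<ge> l" and v: "v \<in> carrier_vec n"
  shows "vnorm (the (mat_inverse A) *\<^sub>v v) \<le> vnorm v / l"
proof -
  have pd: "scalar_prod x (A *\<^sub>v x) \<ge> l * scalar_prod x x" if x: "x \<in> carrier_vec n" for x
  proof -
    have "scalar_prod x x \<ge> 0" unfolding sq_sum[OF x] by (intro sum_nonneg) auto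
    hence "l * scalar_prod x x \<le> min_eig A * scalar_prod x x" using me by (intro mult_right_mono)
    thus ?thesis using rayleigh_eig[OF A n sym x] by simp
  qed
  have "det A \<noteq> 0"
  proof
    assume "det A = 0"
    then obtain x where x: "x \<in> carrier_vec n" "x \<noteq> 0\<^sub>v n" "A *\<^sub>v x = 0\<^sub>v n"
      using det_0_iff_vec_prod_zero[OF A] by blast
    have "l * scalar_prod x x \<le> 0" using pd[OF x(1)] x by simp
    hence "scalar_prod x x \<le> 0" using l by (simp add: mult_le_0_iff)
    hence "(\<Sum>i<n. (x$i)^2) = 0" using sq_sum[OF x(1)] sum_nonneg[of "{..<n}" "\<lambda>i. (x$i)^2"] by simp
    hence "\<forall>i\<in>{..<n}. (x$i)^2 = 0" by (subst sum_nonneg_eq_0_iff[symmetric]) auto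
    hence "x = 0\<^sub>v n" using x(1) by (intro eq_vecI) auto
    with x(2) show False by simp
  qed
  hence unit: "A \<in> Units (ring_mat TYPE(real) n n)" by (rule det_non_zero_imp_unit[OF A])
  obtain B where B: "mat_inverse A = Some B"
  proof (cases "mat_inverse A")
    case None
    from mat_inverse(1)[OF A None, of n] unit show ?thesis by simp
  qed auto
  from mat_inverse(2)[OF A B] have AB: "A * B = 1\<^sub>m n" and Bc: "B \<in> carrier_mat n n" by auto
  define u where "u = B *\<^sub>v v"
  have uc: "u \<in> carrier_vec n" unfolding u_def using Bc v by simp
  have Au: "A *\<^sub>v u = v" unfolding u_def using A Bc v AB
    by (metis assoc_mult_mat_vec one_mult_mat_vec)
  have "l * scalar_prod u u \<le> scalar_prod u v" using pd[OF uc] Au by simp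
  also have "\<dots> \<le> (l/2) * scalar_prod u u + scalar_prod v v / (2*l)" by (rule sp_amgm[OF uc v l])
  finally have "scalar_prod u u \<le> scalar_prod v v / l^2" using l
    by (simp add: field_simps power2_eq_square)
  hence "sqrt (scalar_prod u u) \<le> sqrt (scalar_prod v v / l^2)" by simp
  also have "\<dots> = sqrt (scalar_prod v v) / l" using l by (simp add: real_sqrt_divide)
  finally show ?thesis using vnorm_sp[OF uc] vnorm_sp[OF v] B unfolding u_def by simp
qed



lemma cond_var_bound:
  fixes M H :: "'a measure" and Y G U W :: "'a \<Rightarrow> real" and C :: real
  assumes sfs: "sigma_finite_subalgebra M H"
    and Yint: "integrable M Y"
    and Gm: "G \<in> borel_measurable H" and Gint: "integrable M G"
    and cm: "AE \<omega> in M. real_cond_exp M H Y \<omega> = G \<omega>"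
    and Ueq: "AE \<omega> in M. U \<omega> = Y \<omega> - G \<omega>"
    and U2: "integrable M (\<lambda>\<omega>. (U \<omega>)^2)"
    and Vd: "AE \<omega> in M. W \<omega> = real_cond_exp M H (\<lambda>\<omega>. (U \<omega>)^2) \<omega> - (real_cond_exp M H U \<omega>)^2"
    and Wb: "AE \<omega> in M. W \<omega> \<le> C"
  shows "AE \<omega> in M. real_cond_exp M H (\<lambda>\<omega>. (Y \<omega> - G \<omega>)^2) \<omega> \<le> 2*C"
    and "AE \<omega> in M. real_cond_exp M H (\<lambda>\<omega>. Y \<omega> - G \<omega>) \<omega> = 0"
proof -
  interpret sigma_finite_subalgebra M H by (rule sfs)
  define T where "T = (\<lambda>\<omega>. Y \<omega> - G \<omega>)"
  have GmM[measurable]: "G \<in> borel_measurable M" using Gm measurable_from_subalg[OF subalg] by blast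
  have Ym[measurable]: "Y \<in> borel_measurable M" using Yint by auto
  have Tm[measurable]: "T \<in> borel_measurable M" unfolding T_def by measurable
  have Tint: "integrable M T" unfolding T_def using Yint Gint by auto
  have U2m[measurable]: "(\<lambda>\<omega>. (U \<omega>)^2) \<in> borel_measurable M" using U2 by auto
  have T2eq: "AE \<omega> in M. (U \<omega>)^2 = (T \<omega>)^2" using Ueq unfolding T_def by auto
  have T2int: "integrable M (\<lambda>\<omega>. (T \<omega>)^2)"
    using integrable_cong_AE[OF U2m _ T2eq] U2 by auto
  have "AE \<omega> in M. real_cond_exp M H T \<omega> = real_cond_exp M H Y \<omega> - real_cond_exp M H G \<omega>"
    unfolding T_def by (rule real_cond_exp_diff[OF Yint Gint])
  moreover have "AE \<omega> in M. real_cond_exp M H G \<omega> = G \<omega>" by (rule real_cond_exp_F_meas[OF Gint Gm])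
  ultimately have T0: "AE \<omega> in M. real_cond_exp M H T \<omega> = 0" using cm by auto
  then show "AE \<omega> in M. real_cond_exp M H (\<lambda>\<omega>. Y \<omega> - G \<omega>) \<omega> = 0" unfolding T_def by simp
  define Tp where "Tp = (\<lambda>\<omega>. max 0 (T \<omega>))"
  define Tn where "Tn = (\<lambda>\<omega>. max 0 (- T \<omega>))"
  have Tpm[measurable]: "Tp \<in> borel_measurable M" unfolding Tp_def by measurable
  have Tnm[measurable]: "Tn \<in> borel_measurable M" unfolding Tn_def by measurable
  have Tpint: "integrable M Tp" unfolding Tp_def using Tint by auto
  have Tnint: "integrable M Tn" unfolding Tn_def using Tint by auto
  have Tp2int: "integrable M (\<lambda>\<omega>. (Tp \<omega>)^2)"
    by (rule Bochner_Integration.integrable_bound[OF T2int]) (auto intro!: AE_I2 simp: Tp_def power2_eq_square max_def)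
  have Tn2int: "integrable M (\<lambda>\<omega>. (Tn \<omega>)^2)"
    by (rule Bochner_Integration.integrable_bound[OF T2int]) (auto intro!: AE_I2 simp: Tn_def power2_eq_square max_def)
  define bp where "bp = (\<lambda>\<omega>. enn2real (nn_cond_exp M H (\<lambda>x. ennreal (T x)) \<omega>))"
  define bn where "bn = (\<lambda>\<omega>. enn2real (nn_cond_exp M H (\<lambda>x. ennreal (- T x)) \<omega>))"
  have bpbn: "AE \<omega> in M. bp \<omega> = bn \<omega>"
    using T0 unfolding real_cond_exp_def bp_def bn_def by auto
  have NCE0: "AE \<omega> in M. nn_cond_exp M H (\<lambda>x. 0) \<omega> = 0"
    using nn_cond_exp_F_meas[of "\<lambda>x. 0"] by auto
  have "AE \<omega> in M. real_cond_exp M H Tp \<omega> = bp \<omega>"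
  proof -
    have e1: "(\<lambda>x. ennreal (Tp x)) = (\<lambda>x. ennreal (T x))" unfolding Tp_def by (simp add: ennreal_max_0)
    have e2: "(\<lambda>x. ennreal (- Tp x)) = (\<lambda>x. 0)" unfolding Tp_def by (auto simp: ennreal_neg)
    show ?thesis using NCE0 unfolding real_cond_exp_def e1 e2 bp_def by auto
  qed
  moreover have "AE \<omega> in M. real_cond_exp M H Tn \<omega> = bn \<omega>"
  proof -
    have e1: "(\<lambda>x. ennreal (Tn x)) = (\<lambda>x. ennreal (- T x))" unfolding Tn_def by (simp add: ennreal_max_0)
    have e2: "(\<lambda>x. ennreal (- Tn x)) = (\<lambda>x. 0)" unfolding Tn_def by (auto simp: ennreal_neg)
    show ?thesis using NCE0 unfolding real_cond_exp_def e1 e2 bn_def by auto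
  qed
  moreover have "AE \<omega> in M. (real_cond_exp M H Tp \<omega>)^2 \<le> real_cond_exp M H (\<lambda>x. (Tp x)^2) \<omega>"
    by (rule real_cond_exp_jensens_inequality(2)[where I=UNIV])
       (auto simp: Tpint Tp2int intro!: convex_on_realI[where f'="\<lambda>x. 2*x"] derivative_eq_intros)
  moreover have "AE \<omega> in M. (real_cond_exp M H Tn \<omega>)^2 \<le> real_cond_exp M H (\<lambda>x. (Tn x)^2) \<omega>"
    by (rule real_cond_exp_jensens_inequality(2)[where I=UNIV])
       (auto simp: Tnint Tn2int intro!: convex_on_realI[where f'="\<lambda>x. 2*x"] derivative_eq_intros)
  moreover have "AE \<omega> in M. real_cond_exp M H (\<lambda>x. (Tp x)^2 + (Tn x)^2) \<omega>
      = real_cond_exp M H (\<lambda>x. (Tp x)^2) \<omega> + real_cond_exp M H (\<lambda>x. (Tn x)^2) \<omega>"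
    by (rule real_cond_exp_add[OF Tp2int Tn2int])
  moreover have "(\<lambda>x. (Tp x)^2 + (Tn x)^2) = (\<lambda>x. (T x)^2)"
    unfolding Tp_def Tn_def by (auto simp: max_def power2_eq_square)
  ultimately have low: "AE \<omega> in M. 2 * (bp \<omega>)^2 \<le> real_cond_exp M H (\<lambda>x. (T x)^2) \<omega>"
    using bpbn by auto
  \<comment> \<open>the possibly junk conditional mean of U\<close>
  have Jb: "AE \<omega> in M. (real_cond_exp M H U \<omega>)^2 \<le> (bp \<omega>)^2"
  proof -
    have cp: "AE \<omega> in M. enn2real (nn_cond_exp M H (\<lambda>x. ennreal (U x)) \<omega>) = bp \<omega> \<or>
                  enn2real (nn_cond_exp M H (\<lambda>x. ennreal (U x)) \<omega>) = 0"
    proof (cases "(\<lambda>x. ennreal (U x)) \<in> borel_measurable M")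
      case True
      have "AE \<omega> in M. ennreal (U \<omega>) = ennreal (T \<omega>)" using Ueq unfolding T_def by auto
      from nn_cond_exp_cong[OF this True] show ?thesis unfolding bp_def by auto
    next
      case False then show ?thesis unfolding nn_cond_exp_def by auto
    qed
    have cn: "AE \<omega> in M. enn2real (nn_cond_exp M H (\<lambda>x. ennreal (- U x)) \<omega>) = bn \<omega> \<or>
                  enn2real (nn_cond_exp M H (\<lambda>x. ennreal (- U x)) \<omega>) = 0"
    proof (cases "(\<lambda>x. ennreal (- U x)) \<in> borel_measurable M")
      case True
      have "AE \<omega> in M. ennreal (- U \<omega>) = ennreal (- T \<omega>)" using Ueq unfolding T_def by auto
      from nn_cond_exp_cong[OF this True] show ?thesis unfolding bn_def by auto
    next
      case False then show ?thesis unfolding nn_cond_exp_def by auto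
    qed
    have bp0: "AE \<omega> in M. bp \<omega> \<ge> 0" unfolding bp_def by auto
    show ?thesis using cp cn bpbn bp0 unfolding real_cond_exp_def
      by eventually_elim (auto simp: power2_eq_square)
  qed
  have U2T2: "AE \<omega> in M. real_cond_exp M H (\<lambda>\<omega>. (U \<omega>)^2) \<omega> = real_cond_exp M H (\<lambda>x. (T x)^2) \<omega>"
    by (rule real_cond_exp_cong[OF T2eq]) auto
  have "AE \<omega> in M. real_cond_exp M H (\<lambda>x. (T x)^2) \<omega> \<le> 2*C"
    using low Jb U2T2 Vd Wb by eventually_elim auto
  then show "AE \<omega> in M. real_cond_exp M H (\<lambda>\<omega>. (Y \<omega> - G \<omega>)^2) \<omega> \<le> 2*C" unfolding T_def by simp
qed


lemma abs_le_1_sq: fixes z :: real shows "\<bar>z\<bar> \<le> 1 + z^2"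
proof -
  have "0 \<le> (\<bar>z\<bar> - 1)^2" by simp
  hence "2*\<bar>z\<bar> \<le> 1 + \<bar>z\<bar>^2" by (simp add: power2_eq_square algebra_simps)
  thus ?thesis by (simp add: power2_abs)
qed

lemma cond_moment:
  fixes M H :: "'a measure" and T \<psi> :: "'a \<Rightarrow> real" and K :: real
  assumes sfs: "sigma_finite_subalgebra M H" and ps: "prob_space M"
    and Tm[measurable]: "T \<in> borel_measurable M"
    and T2int: "integrable M (\<lambda>\<omega>. (T \<omega>)^2)"
    and T2b: "AE \<omega> in M. real_cond_exp M H (\<lambda>\<omega>. (T \<omega>)^2) \<omega> \<le> K"
    and T0: "AE \<omega> in M. real_cond_exp M H T \<omega> = 0"
    and \<psi>m: "\<psi> \<in> borel_measurable H"
    and \<psi>2: "integrable M (\<lambda>\<omega>. (\<psi> \<omega>)^2)"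
  shows "integrable M (\<lambda>\<omega>. (T \<omega> * \<psi> \<omega>)^2)"
    and "(\<integral>\<omega>. (T \<omega> * \<psi> \<omega>)^2 \<partial>M) \<le> K * (\<integral>\<omega>. (\<psi> \<omega>)^2 \<partial>M)"
    and "integrable M (\<lambda>\<omega>. T \<omega> * \<psi> \<omega>)"
    and "(\<integral>\<omega>. T \<omega> * \<psi> \<omega> \<partial>M) = 0"
proof -
  interpret sigma_finite_subalgebra M H by (rule sfs)
  interpret P: prob_space M by (rule ps)
  have \<psi>M[measurable]: "\<psi> \<in> borel_measurable M" using \<psi>m measurable_from_subalg[OF subalg] by blast
  have K0: "AE \<omega> in M. K \<ge> 0"
  proof -
    have "AE \<omega> in M. real_cond_exp M H (\<lambda>\<omega>. (T \<omega>)^2) \<omega> \<ge> 0"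
      by (rule real_cond_exp_pos) auto
    with T2b show ?thesis by eventually_elim auto
  qed
  have Kn: "K \<ge> 0"
  proof (rule ccontr)
    assume "\<not> K \<ge> 0"
    hence "AE \<omega> in M. False" using K0 by simp
    thus False using P.AE_False by simp
  qed
  define N where "N = nn_cond_exp M H (\<lambda>x. ennreal ((T x)^2))"
  have NCE0: "AE \<omega> in M. nn_cond_exp M H (\<lambda>x. 0) \<omega> = 0"
    using nn_cond_exp_F_meas[of "\<lambda>x. 0"] by auto
  have e2: "(\<lambda>x. ennreal (- ((T x)^2))) = (\<lambda>x. 0)" by (auto simp: ennreal_neg)
  have RN: "AE \<omega> in M. real_cond_exp M H (\<lambda>\<omega>. (T \<omega>)^2) \<omega> = enn2real (N \<omega>)"
    using NCE0 unfolding real_cond_exp_def e2 N_def by auto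
  have "(\<integral>\<^sup>+x. 1 * N x \<partial>M) = (\<integral>\<^sup>+x. 1 * ennreal ((T x)^2) \<partial>M)"
    unfolding N_def by (rule nn_cond_exp_intg) auto
  also have "\<dots> = ennreal (\<integral>x. (T x)^2 \<partial>M)"
    using nn_integral_eq_integral[OF T2int] by simp
  finally have "integral\<^sup>N M N \<noteq> \<infinity>" by simp
  hence Nfin: "AE \<omega> in M. N \<omega> \<noteq> \<infinity>" by (intro nn_integral_PInf_AE) (auto simp: N_def)
  have NK: "AE \<omega> in M. N \<omega> \<le> ennreal K"
    using Nfin RN T2b
  proof eventually_elim
    case (elim \<omega>)
    have "N \<omega> = ennreal (enn2real (N \<omega>))" using elim(1) by (simp add: ennreal_enn2real_if)
    also have "\<dots> \<le> ennreal K" using elim by (intro ennreal_leI) simp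
    finally show ?case .
  qed
  have "(\<integral>\<^sup>+x. ennreal ((T x * \<psi> x)^2) \<partial>M) = (\<integral>\<^sup>+x. ennreal ((\<psi> x)^2) * ennreal ((T x)^2) \<partial>M)"
    by (intro nn_integral_cong) (simp add: ennreal_mult'[symmetric] power_mult_distrib mult.commute)
  also have "\<dots> = (\<integral>\<^sup>+x. ennreal ((\<psi> x)^2) * N x \<partial>M)"
    unfolding N_def by (rule nn_cond_exp_intg[symmetric]) (use \<psi>m in auto)
  also have "\<dots> \<le> (\<integral>\<^sup>+x. ennreal K * ennreal ((\<psi> x)^2) \<partial>M)"
    by (intro nn_integral_mono_AE, use NK in eventually_elim) (auto simp: mult.commute intro: mult_right_mono)
  also have "\<dots> = ennreal K * ennreal (\<integral>x. (\<psi> x)^2 \<partial>M)"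
    by (subst nn_integral_cmult) (auto simp: nn_integral_eq_integral[OF \<psi>2])
  also have "\<dots> = ennreal (K * (\<integral>x. (\<psi> x)^2 \<partial>M))" using Kn by (simp add: ennreal_mult)
  finally have bnd: "(\<integral>\<^sup>+x. ennreal ((T x * \<psi> x)^2) \<partial>M) \<le> ennreal (K * (\<integral>x. (\<psi> x)^2 \<partial>M))" .
  show int2: "integrable M (\<lambda>\<omega>. (T \<omega> * \<psi> \<omega>)^2)"
  proof (rule integrableI_bounded)
    have "(\<integral>\<^sup>+x. ennreal (norm ((T x * \<psi> x)^2)) \<partial>M) = (\<integral>\<^sup>+x. ennreal ((T x * \<psi> x)^2) \<partial>M)"
      by simp
    also have "\<dots> < \<infinity>" using bnd by (simp add: le_less_trans)
    finally show "(\<integral>\<^sup>+x. ennreal (norm ((T x * \<psi> x)^2)) \<partial>M) < \<infinity>" .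
  qed auto
  have "ennreal (\<integral>\<omega>. (T \<omega> * \<psi> \<omega>)^2 \<partial>M) \<le> ennreal (K * (\<integral>x. (\<psi> x)^2 \<partial>M))"
    using bnd nn_integral_eq_integral[OF int2] by simp
  moreover have "0 \<le> K * (\<integral>x. (\<psi> x)^2 \<partial>M)" using Kn by simp
  ultimately show "(\<integral>\<omega>. (T \<omega> * \<psi> \<omega>)^2 \<partial>M) \<le> K * (\<integral>\<omega>. (\<psi> \<omega>)^2 \<partial>M)"
    by (simp add: ennreal_le_iff)
  show int1: "integrable M (\<lambda>\<omega>. T \<omega> * \<psi> \<omega>)"
  proof (rule Bochner_Integration.integrable_bound[of _ "\<lambda>\<omega>. 1 + (T \<omega> * \<psi> \<omega>)^2"])
    show "integrable M (\<lambda>\<omega>. 1 + (T \<omega> * \<psi> \<omega>)^2)" using int2 by auto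
    show "AE x in M. norm (T x * \<psi> x) \<le> norm (1 + (T x * \<psi> x)^2)"
      using abs_le_1_sq by (intro AE_I2) (auto intro: order_trans[OF _ abs_ge_self])
  qed auto
  have "(\<integral>\<omega>. \<psi> \<omega> * real_cond_exp M H T \<omega> \<partial>M) = (\<integral>\<omega>. \<psi> \<omega> * T \<omega> \<partial>M)"
    by (rule real_cond_exp_intg(2)) (use int1 \<psi>m in \<open>auto simp: mult.commute\<close>)
  moreover have "(\<integral>\<omega>. \<psi> \<omega> * real_cond_exp M H T \<omega> \<partial>M) = 0"
    using T0 by (subst integral_cong_AE[where g="\<lambda>_. 0"]) auto
  ultimately show "(\<integral>\<omega>. T \<omega> * \<psi> \<omega> \<partial>M) = 0" by (simp add: mult.commute)
qed



lemma indep_pair: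
  fixes W :: "nat \<Rightarrow> 'a \<Rightarrow> real"
  assumes ps: "prob_space M" and ind: "prob_space.indep_vars M (\<lambda>_. borel) W UNIV" and ij: "i \<noteq> j"
  shows "prob_space.indep_var M borel (W i) borel (W j)"
proof -
  interpret prob_space M by (rule ps)
  have "indep_var (PiM {i} (\<lambda>_. borel)) (\<lambda>\<omega>. restrict (\<lambda>k. W k \<omega>) {i})
                  (PiM {j} (\<lambda>_. borel)) (\<lambda>\<omega>. restrict (\<lambda>k. W k \<omega>) {j})"
    by (rule indep_var_restrict[OF ind]) (use ij in auto)
  hence "indep_var borel ((\<lambda>f. f i) \<circ> (\<lambda>\<omega>. restrict (\<lambda>k. W k \<omega>) {i}))
                   borel ((\<lambda>f. f j) \<circ> (\<lambda>\<omega>. restrict (\<lambda>k. W k \<omega>) {j}))"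
    by (rule indep_var_compose) (auto intro: measurable_component_singleton)
  moreover have "(\<lambda>f. f i) \<circ> (\<lambda>\<omega>. restrict (\<lambda>k. W k \<omega>) {i}) = W i" by (auto simp: fun_eq_iff)
  moreover have "(\<lambda>f. f j) \<circ> (\<lambda>\<omega>. restrict (\<lambda>k. W k \<omega>) {j}) = W j" by (auto simp: fun_eq_iff)
  ultimately show ?thesis by simp
qed

lemma var_sum_indep:
  fixes W :: "nat \<Rightarrow> 'a \<Rightarrow> real"
  assumes ps: "prob_space M" and ind: "prob_space.indep_vars M (\<lambda>_. borel) W UNIV"
    and int2: "\<And>i. integrable M (\<lambda>\<omega>. (W i \<omega>)^2)"
    and intW: "\<And>i. integrable M (W i)"
    and mean0: "\<And>i. (\<integral>\<omega>. W i \<omega> \<partial>M) = 0"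
  shows "integrable M (\<lambda>\<omega>. (\<Sum>i<n. W i \<omega>)^2)"
    and "(\<integral>\<omega>. (\<Sum>i<n. W i \<omega>)^2 \<partial>M) = (\<Sum>i<n. \<integral>\<omega>. (W i \<omega>)^2 \<partial>M)"
proof -
  interpret prob_space M by (rule ps)
  have sq: "(\<lambda>\<omega>. (\<Sum>i<n. W i \<omega>)^2) = (\<lambda>\<omega>. \<Sum>i<n. \<Sum>j<n. W i \<omega> * W j \<omega>)"
    by (simp add: power2_eq_square sum_product)
  have ip: "integrable M (\<lambda>\<omega>. W i \<omega> * W j \<omega>)" for i j
  proof (cases "i = j")
    case True then show ?thesis using int2[of i] by (simp add: power2_eq_square)
  next
    case False
    show ?thesis by (rule indep_var_integrable[OF indep_pair[OF ps ind False] intW intW])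
  qed
  have ep: "(\<integral>\<omega>. W i \<omega> * W j \<omega> \<partial>M) = (if i = j then (\<integral>\<omega>. (W i \<omega>)^2 \<partial>M) else 0)" for i j
  proof (cases "i = j")
    case True then show ?thesis by (simp add: power2_eq_square)
  next
    case False
    show ?thesis using indep_var_lebesgue_integral[OF indep_pair[OF ps ind False] intW intW] False mean0 by simp
  qed
  show "integrable M (\<lambda>\<omega>. (\<Sum>i<n. W i \<omega>)^2)" unfolding sq using ip by auto
  have "(\<integral>\<omega>. (\<Sum>i<n. W i \<omega>)^2 \<partial>M) = (\<Sum>i<n. \<Sum>j<n. (\<integral>\<omega>. W i \<omega> * W j \<omega> \<partial>M))"
    unfolding sq using ip by (simp add: Bochner_Integration.integral_sum)
  also have "\<dots> = (\<Sum>i<n. \<integral>\<omega>. (W i \<omega>)^2 \<partial>M)"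
    unfolding ep by (simp add: sum.delta)
  finally show "(\<integral>\<omega>. (\<Sum>i<n. W i \<omega>)^2 \<partial>M) = (\<Sum>i<n. \<integral>\<omega>. (W i \<omega>)^2 \<partial>M)" .
qed



lemma cyl_null:
  fixes E :: "real set" and j :: "'d::finite"
  assumes E: "E \<in> null_sets lborel"
  shows "{x::real^'d. x$j \<in> E} \<in> null_sets lborel"
proof -
  define e :: "real^'d" where "e = axis j 1"
  have eB: "e \<in> Basis" unfolding e_def by simp
  have Eb[measurable]: "E \<in> sets borel" using E by (simp add: null_sets_def)
  define S where "S = (\<lambda>b::real^'d. if b = e then E else UNIV)"
  have Sm: "\<And>b. indicator (S b) \<in> borel_measurable (borel :: real measure)"
    unfolding S_def by (auto intro!: borel_measurable_indicator)
  have ind: "(indicator {x::real^'d. x$j \<in> E} x :: ennreal) = (\<Prod>b\<in>Basis. indicator (S b) (x \<bullet> b))" for x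
  proof -
    have "(\<Prod>b\<in>Basis. (indicator (S b) (x \<bullet> b) :: ennreal)) = (\<Prod>b\<in>Basis. if b = e then indicator E (x \<bullet> b) else 1)"
      by (intro prod.cong refl) (auto simp: S_def)
    also have "\<dots> = indicator E (x \<bullet> e)" using eB by (simp add: prod.delta)
    also have "\<dots> = indicator {x::real^'d. x$j \<in> E} x" unfolding e_def
      by (simp add: cart_eq_inner_axis[symmetric] indicator_def)
    finally show ?thesis by simp
  qed
  have meas: "{x::real^'d. x$j \<in> E} \<in> sets lborel" by measurable
  have "emeasure lborel {x::real^'d. x$j \<in> E} = (\<integral>\<^sup>+x. indicator {x::real^'d. x$j \<in> E} x \<partial>lborel)"
    using meas by simp
  also have "\<dots> = (\<integral>\<^sup>+x. (\<Prod>b\<in>Basis. indicator (S b) (x \<bullet> b)) \<partial>lborel)" by (simp add: ind)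
  also have "\<dots> = (\<Prod>b\<in>Basis. (\<integral>\<^sup>+x. indicator (S b) x \<partial>lborel))"
    by (rule nn_integral_lborel_prod) (use Sm in auto)
  also have "\<dots> = 0"
  proof (rule prod_zero)
    show "finite (Basis :: (real^'d) set)" by simp
    show "\<exists>b\<in>Basis. (\<integral>\<^sup>+x. indicator (S b) x \<partial>lborel) = 0"
      using eB E by (intro bexI[of _ e]) (auto simp: S_def null_sets_def)
  qed
  finally show ?thesis using meas by (simp add: null_sets_def)
qed

lemma leb_surrogate:
  fixes p :: "real \<Rightarrow> real"
  assumes "p integrable_on {-1..1}"
  shows "\<exists>g N. g \<in> borel_measurable borel \<and> N \<in> null_sets lborel \<and> {t\<in>{-1..1}. p t \<noteq> g t} \<subseteq> N"
proof -
  have "p \<in> borel_measurable (lebesgue_on {-1..1})" by (rule integrable_imp_measurable[OF assms])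
  hence "(\<lambda>x. if x \<in> {-1..1} then p x else 0) \<in> borel_measurable lebesgue"
    by (rule borel_measurable_if_I) auto
  hence "(\<lambda>x. if x \<in> {-1..1} then p x else 0) \<in> borel_measurable (completion lborel)"
    by simp
  then obtain g where g: "g \<in> borel_measurable lborel" and ae: "AE x in lborel. (if x \<in> {-1..1} then p x else 0) = g x"
    using completion_ex_borel_measurable_real by blast
  obtain N where N0: "{x \<in> space lborel. \<not> ((if x \<in> {-1..1} then p x else 0) = g x)} \<subseteq> N"
     "emeasure lborel N = 0" "N \<in> sets lborel"
    by (rule AE_E[OF ae])
  hence N: "{x \<in> space lborel. \<not> ((if x \<in> {-1..1} then p x else 0) = g x)} \<subseteq> N" "N \<in> null_sets lborel"
    by (auto intro: null_setsI)
  show ?thesis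
    using g N by (intro exI[of _ g] exI[of _ N]) (auto simp: measurable_lborel1)
qed





theorem lemma5:
  fixes M :: "'a measure"
    and Y :: "nat \<Rightarrow> 'a \<Rightarrow> real" and X :: "nat \<Rightarrow> 'a \<Rightarrow> real^'d::finite"
    and F F' F'' :: "real \<Rightarrow> real" and \<mu> :: real
    and mj :: "'d \<Rightarrow> real \<Rightarrow> real" and \<theta> :: "'d \<Rightarrow> nat \<Rightarrow> real"
    and p :: "nat \<Rightarrow> real \<Rightarrow> real"
    and fX :: "real^'d \<Rightarrow> real" and V :: "real^'d \<Rightarrow> real"
    and K :: "real \<Rightarrow> real" and \<kappa> :: "nat \<Rightarrow> nat" and h :: "nat \<Rightarrow> real"
    and c_V C_V C_U C_m C_F1 c_F2 C_F2 C_Q c_lam c_kap C_theta C_kap C_h \<nu> :: real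
  assumes prob: "prob_space M"
    and d2: "CARD('d) \<ge> 2"
    \<comment> \<open>(A1) i.i.d. data and the conditional mean model\<close>
    and rvY: "\<And>i. Y i \<in> borel_measurable M"
    and rvX: "\<And>i. X i \<in> borel_measurable M"
    and indep: "prob_space.indep_vars M (\<lambda>_. borel) (\<lambda>i \<omega>. (Y i \<omega>, X i \<omega>)) UNIV"
    and ident: "\<And>i. distr M borel (\<lambda>\<omega>. (Y i \<omega>, X i \<omega>)) = distr M borel (\<lambda>\<omega>. (Y 0 \<omega>, X 0 \<omega>))"
    and intY: "integrable M (Y 0)"
    and cmean: "AE \<omega> in M. real_cond_exp M (vimage_algebra (space M) (X 0) borel) (Y 0) \<omega>
                   = F (\<mu> + madd mj (X 0 \<omega>))"
    \<comment> \<open>(A2) support, density, conditional variance, moments\<close>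
    and dens: "distributed M lborel (X 0) (\<lambda>x. ennreal (fX x))"
    and dens_out: "\<And>x. x \<notin> cube \<Longrightarrow> fX x = 0"
    and dens_bdd: "\<exists>cf Cf. 0 < cf \<and> (\<forall>x\<in>cube. cf \<le> fX x \<and> fX x \<le> Cf)"
    and dens_C2: "\<exists>Df D2f. (\<forall>x\<in>cube. (fX has_derivative blinfun_apply (Df x)) (at x within cube)
                    \<and> (Df has_derivative blinfun_apply (D2f x)) (at x within cube))
                    \<and> continuous_on cube D2f"
    and V_bdd: "0 < c_V" "\<And>x. x \<in> cube \<Longrightarrow> c_V \<le> V x \<and> V x \<le> C_V"
    and V_def: "AE \<omega> in M. V (X 0 \<omega>) =
        real_cond_exp M (vimage_algebra (space M) (X 0) borel)
          (\<lambda>\<omega>. (Y 0 \<omega> - F (\<mu> + madd mj (X 0 \<omega>)))^2) \<omega>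
        - (real_cond_exp M (vimage_algebra (space M) (X 0) borel)
          (\<lambda>\<omega>. Y 0 \<omega> - F (\<mu> + madd mj (X 0 \<omega>))) \<omega>)^2"
    and U2_int: "integrable M (\<lambda>\<omega>. (Y 0 \<omega> - F (\<mu> + madd mj (X 0 \<omega>)))^2)"
    and U_mom: "\<And>j::nat. j \<ge> 2 \<Longrightarrow>
        (\<integral>\<^sup>+\<omega>. ennreal (\<bar>Y 0 \<omega> - F (\<mu> + madd mj (X 0 \<omega>))\<bar> ^ j) \<partial>M)
          \<le> ennreal (C_U ^ (j - 2) * fact j * (\<integral>\<omega>. (Y 0 \<omega> - F (\<mu> + madd mj (X 0 \<omega>)))^2 \<partial>M))"
    \<comment> \<open>(A3) additive components and link function\<close>
    and m_bdd: "\<And>j t. t \<in> {-1..1} \<Longrightarrow> \<bar>mj j t\<bar> \<le> C_m"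
    and m_int0: "\<And>j. (mj j has_integral 0) {-1..1}"
    and m_C2: "\<And>j. \<exists>m1 m2. (\<forall>t\<in>{-1..1}. (mj j has_real_derivative m1 t) (at t within {-1..1})
                    \<and> (m1 has_real_derivative m2 t) (at t within {-1..1}))
                    \<and> continuous_on {-1..1} m2"
    and F_bdd: "\<And>t. t \<in> {\<mu> - C_m * CARD('d) .. \<mu> + C_m * CARD('d)} \<Longrightarrow>
                  F t \<le> C_F1 \<and> c_F2 \<le> F' t \<and> F' t \<le> C_F2"
    and cF2_pos: "0 < c_F2"
    and F_C2: "\<And>t. t \<in> {\<mu> - C_m * CARD('d) .. \<mu> + C_m * CARD('d)} \<Longrightarrow>
                  (F has_real_derivative F' t) (at t within {\<mu> - C_m * CARD('d) .. \<mu> + C_m * CARD('d)})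
                  \<and> (F' has_real_derivative F'' t) (at t within {\<mu> - C_m * CARD('d) .. \<mu> + C_m * CARD('d)})"
    and F''_cont: "continuous_on {\<mu> - C_m * CARD('d) .. \<mu> + C_m * CARD('d)} F''"
    and F''_lip: "\<exists>L. L-lipschitz_on {\<mu> - C_m * CARD('d) .. \<mu> + C_m * CARD('d)} F''"
    \<comment> \<open>basis expansion m_j = sum_k theta_jk p_k (in L2[-1,1])\<close>
    and m_expand: "\<And>j. (\<lambda>N. integral {-1..1} (\<lambda>t. (mj j t - (\<Sum>k=1..N. \<theta> j k * p k t))^2))
                     \<longlonglongrightarrow> 0"
    \<comment> \<open>(A4)\<close>
    and Q_entries: "\<And>k a b. a < k * CARD('d) + 1 \<Longrightarrow> b < k * CARD('d) + 1 \<Longrightarrow>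
                      \<bar>Qmat M (X 0) F' \<mu> mj p k $$ (a, b)\<bar> \<le> C_Q"
    and Q_eig: "0 < c_lam" "\<And>k. min_eig (Qmat M (X 0) F' \<mu> mj p k) > c_lam"
    and Psi_eig: "\<exists>C. \<forall>k. max_eig (Psimat M (X 0) F' \<mu> mj p V k) \<le> C"
    \<comment> \<open>(A5)\<close>
    and p_int0: "\<And>k. k \<ge> 1 \<Longrightarrow> (p k has_integral 0) {-1..1}"
    and p_orth: "\<And>j k. j \<ge> 1 \<Longrightarrow> k \<ge> 1 \<Longrightarrow>
                   ((\<lambda>t. p j t * p k t) has_integral (if j = k then 1 else 0)) {-1..1}"
    and zeta_low: "0 < c_kap" "eventually (\<lambda>k. zeta p k TYPE('d) \<ge> c_kap) sequentially"
    and zeta_up: "(\<lambda>k. zeta p k TYPE('d)) \<in> O(\<lambda>k. sqrt (real k))"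
    and approx: "\<exists>C. eventually (\<lambda>k. \<exists>\<theta>0. \<theta>0 \<in> carrier_vec (k * CARD('d) + 1)
                      \<and> (\<forall>i < k * CARD('d) + 1. \<bar>\<theta>0 $ i\<bar> \<le> C_theta)
                      \<and> (\<forall>x\<in>cube. \<bar>\<mu> + madd mj x - scalar_prod (Pvec p k x) \<theta>0\<bar> \<le> C / (real k)^2))
                   sequentially"
    and theta_int: "\<bar>\<mu>\<bar> < C_theta" "\<And>j k. k \<ge> 1 \<Longrightarrow> \<bar>\<theta> j k\<bar> < C_theta"
    \<comment> \<open>(A6)\<close>
    and nu: "0 < \<nu>" "\<nu> < 1/30"
    and kappa: "0 < C_kap" "\<And>n. \<kappa> n = nat \<lfloor>C_kap * real n powr (4/15 + \<nu>)\<rfloor>"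
    and bandwidth: "0 < C_h" "\<And>n. h n = C_h * real n powr (-1/5)"
    \<comment> \<open>(A7)\<close>
    and K_bdd: "\<exists>B. \<forall>t. \<bar>K t\<bar> \<le> B"
    and K_cont: "continuous_on UNIV K"
    and K_sym: "\<And>t. K (- t) = K t"
    and K_nonneg: "\<And>t. 0 \<le> K t"
    and K_supp: "\<And>t. t \<notin> {-1..1} \<Longrightarrow> K t = 0"
    and K_int: "(K has_integral 1) {-1..1}"
  shows "bigOp M
     (\<lambda>n \<omega>. if min_eig (Qhat F' \<mu> mj p (\<kappa> n) X n \<omega>) \<ge> c_lam / 2
            then vnorm (the (mat_inverse (Qhat F' \<mu> mj p (\<kappa> n) X n \<omega>))
                   *\<^sub>v ((1 / real n) \<cdot>\<^sub>v (transpose_mat (Zmat F' \<mu> mj p (\<kappa> n) X n \<omega>)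
                          *\<^sub>v Ubar F \<mu> mj Y X n \<omega>)))
            else 0)
     (\<lambda>n. sqrt (real (\<kappa> n)) / sqrt (real n))"
proof -
  interpret P: prob_space M by (rule prob)
  define D where "D = CARD('d)"
  define lo where "lo = \<mu> - C_m * CARD('d)"
  define hi where "hi = \<mu> + C_m * CARD('d)"
  have Cm0: "C_m \<ge> 0" using m_bdd[of 0 undefined] by auto
  have lohi: "lo \<le> hi" unfolding lo_def hi_def using Cm0 by simp
  define cl :: "real \<Rightarrow> real \<Rightarrow> real \<Rightarrow> real" where "cl = (\<lambda>a b t. max a (min b t))"
  have cl_in: "a \<le> b \<Longrightarrow> cl a b t \<in> {a..b}" for a b t unfolding cl_def by auto
  have cl_id: "t \<in> {a..b} \<Longrightarrow> cl a b t = t" for a b t unfolding cl_def by auto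
  have cl_cont: "continuous_on UNIV (cl a b)" for a b unfolding cl_def by (intro continuous_intros)
  have cube_iff: "x \<in> cube \<longleftrightarrow> (\<forall>j. x$j \<in> {-1..1})" for x :: "real^'d"
    unfolding cube_def mem_box_cart by auto
  have mj_cont: "continuous_on {-1..1} (mj j)" for j
  proof -
    obtain m1 m2 where "\<forall>t\<in>{-1..1}. (mj j has_real_derivative m1 t) (at t within {-1..1})"
      using m_C2[of j] by blast
    thus ?thesis by (intro DERIV_continuous_on) auto
  qed
  have F_cont: "continuous_on {lo..hi} F" unfolding lo_def hi_def
    by (intro DERIV_continuous_on) (use F_C2 in blast)
  have F'_cont: "continuous_on {lo..hi} F'" unfolding lo_def hi_def
    by (intro DERIV_continuous_on) (use F_C2 in blast)
  define mt where "mt = (\<lambda>j t. mj j (cl (-1) 1 t))"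
  define Ft where "Ft = (\<lambda>t. F (cl lo hi t))"
  define F't where "F't = (\<lambda>t. F' (cl lo hi t))"
  have mt_cont: "continuous_on UNIV (mt j)" for j unfolding mt_def
    by (rule continuous_on_compose2[OF mj_cont[of j] cl_cont]) (use cl_in in auto)
  have Ft_cont: "continuous_on UNIV Ft" unfolding Ft_def
    by (rule continuous_on_compose2[OF F_cont cl_cont]) (use cl_in lohi in auto)
  have F't_cont: "continuous_on UNIV F't" unfolding F't_def
    by (rule continuous_on_compose2[OF F'_cont cl_cont]) (use cl_in lohi in auto)
  have mt_meas[measurable]: "mt j \<in> borel_measurable borel" for j by (rule borel_measurable_continuous_onI[OF mt_cont])
  have Ft_meas[measurable]: "Ft \<in> borel_measurable borel" by (rule borel_measurable_continuous_onI[OF Ft_cont])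
  have F't_meas[measurable]: "F't \<in> borel_measurable borel" by (rule borel_measurable_continuous_onI[OF F't_cont])
  obtain BF where BF: "\<And>t. \<bar>Ft t\<bar> \<le> BF"
  proof -
    have "compact (Ft ` {lo..hi})" by (rule compact_continuous_image[OF continuous_on_subset[OF Ft_cont]]) auto
    then obtain B where "\<forall>y\<in>Ft ` {lo..hi}. norm y \<le> B" using compact_imp_bounded bounded_iff by metis
    moreover have "Ft t = Ft (cl lo hi t)" for t unfolding Ft_def using cl_id[OF cl_in[OF lohi]] by simp
    ultimately show ?thesis using that cl_in[OF lohi] by (metis image_eqI real_norm_def)
  qed
  have "\<forall>k. \<exists>g N. 1 \<le> k \<longrightarrow> (g \<in> borel_measurable borel \<and> N \<in> null_sets lborel \<and> {t\<in>{-1..1}. p k t \<noteq> g t} \<subseteq> N)"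
  proof
    fix k :: nat
    show "\<exists>g N. 1 \<le> k \<longrightarrow> (g \<in> borel_measurable borel \<and> N \<in> null_sets lborel \<and> {t\<in>{-1..1}. p k t \<noteq> g t} \<subseteq> N)"
    proof (cases "1 \<le> k")
      case True
      hence "p k integrable_on {-1..1}" using p_int0[OF True] by blast
      from leb_surrogate[OF this] show ?thesis by blast
    qed auto
  qed
  then obtain g Nk where gN: "\<And>k. 1 \<le> k \<Longrightarrow> g k \<in> borel_measurable borel \<and> Nk k \<in> null_sets lborel \<and> {t\<in>{-1..1}. p k t \<noteq> g k t} \<subseteq> Nk k"
    by metis
  define Gd where "Gd = {x::real^'d. (\<forall>j. x$j \<in> {-1..1}) \<and> (\<forall>k. \<forall>j. x$j \<notin> Nk (Suc k))}"
  have NkB[measurable]: "Nk (Suc k) \<in> sets borel" for k using gN[of "Suc k"] by (auto simp: null_sets_def)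
  have Gd_meas[measurable]: "Gd \<in> sets borel" unfolding Gd_def by measurable
  have Gd_cube: "x \<in> Gd \<Longrightarrow> x \<in> cube" for x unfolding Gd_def cube_iff by auto
  define Pe where "Pe = (\<lambda>(\<kappa>::nat) (a::nat) (x::real^'d). if a = 0 then 1 else g ((a-1) mod \<kappa> + 1) (x $ coord ((a-1) div \<kappa>)))"
  define mmt where "mmt = (\<lambda>x::real^'d. \<mu> + madd mt x)"
  have gp_madd: "x \<in> Gd \<Longrightarrow> madd mj x = madd mt x" for x
    unfolding madd_def mt_def Gd_def using cl_id by (intro sum.cong refl) auto
  have mmt_in: "x \<in> Gd \<Longrightarrow> mmt x \<in> {lo..hi}" for x
  proof -
    assume x: "x \<in> Gd"
    have "\<bar>madd mt x\<bar> \<le> (\<Sum>j\<in>UNIV. \<bar>mt j (x$j)\<bar>)" unfolding madd_def by (rule sum_abs)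
    also have "\<dots> \<le> (\<Sum>j\<in>(UNIV::'d set). C_m)"
      by (intro sum_mono) (unfold mt_def, rule m_bdd, use cl_in in auto)
    also have "\<dots> = C_m * CARD('d)" by simp
    finally show ?thesis unfolding mmt_def lo_def hi_def by auto
  qed
  have gp_F: "x \<in> Gd \<Longrightarrow> F (\<mu> + madd mj x) = Ft (mmt x)" for x
    using gp_madd mmt_in cl_id unfolding Ft_def mmt_def by auto
  have gp_F': "x \<in> Gd \<Longrightarrow> F' (\<mu> + madd mj x) = F't (mmt x)" for x
    using gp_madd mmt_in cl_id unfolding F't_def mmt_def by auto
  have gp_P: "x \<in> Gd \<Longrightarrow> a < \<kappa>' * CARD('d) + 1 \<Longrightarrow> Pvec p \<kappa>' x $ a = Pe \<kappa>' a x" for x a \<kappa>'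
  proof -
    assume x: "x \<in> Gd" and a: "a < \<kappa>' * CARD('d) + 1"
    show ?thesis
    proof (cases "a = 0")
      case True then show ?thesis using a unfolding Pvec_def Pe_def by simp
    next
      case False
      define k where "k = (a - 1) mod \<kappa>'"
      define j :: 'd where "j = coord ((a - 1) div \<kappa>')"
      have xj: "x$j \<in> {-1..1}" "x$j \<notin> Nk (Suc k)" using x unfolding Gd_def by auto
      have "p (Suc k) (x$j) = g (Suc k) (x$j)" using gN[of "Suc k"] xj by auto
      then show ?thesis using a False unfolding Pvec_def Pe_def k_def j_def by simp
    qed
  qed
  have Pe_meas[measurable]: "(\<lambda>x. Pe \<kappa>' a x) \<in> borel_measurable borel" for \<kappa>' a
  proof (cases "a = 0")
    case False
    have gm: "g ((a-1) mod \<kappa>' + 1) \<in> borel_measurable borel" using gN by simp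
    have "(\<lambda>x::real^'d. g ((a-1) mod \<kappa>' + 1) (x $ coord ((a-1) div \<kappa>'))) \<in> borel_measurable borel"
      by (rule measurable_compose[OF _ gm]) (intro borel_measurable_continuous_onI continuous_intros)
    then show ?thesis using False unfolding Pe_def by simp
  qed (simp add: Pe_def)
  have mmt_meas[measurable]: "mmt \<in> borel_measurable borel" unfolding mmt_def madd_def
    by (intro borel_measurable_continuous_onI continuous_intros continuous_on_compose2[OF mt_cont]) auto
  have dist0: "distr M lborel (X 0) = density lborel (\<lambda>x. ennreal (fX x))"
    and fXm: "(\<lambda>x. ennreal (fX x)) \<in> borel_measurable lborel"
    using dens unfolding distributed_def by auto
  have X0lb: "X 0 \<in> measurable M lborel" using rvX[of 0] by simp
  have "AE x in lborel. \<forall>k. \<forall>j::'d. (x::real^'d)$j \<notin> Nk (Suc k)"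
  proof (rule AE_all_countable[THEN iffD2], rule allI)
    fix k :: nat
    have "AE x in lborel. \<forall>j\<in>(UNIV::'d set). (x::real^'d)$j \<notin> Nk (Suc k)"
    proof (rule AE_finite_allI)
      fix j :: 'd
      have "{x::real^'d. x$j \<in> Nk (Suc k)} \<in> null_sets lborel" using gN[of "Suc k"] by (intro cyl_null) auto
      from AE_not_in[OF this] show "AE x in lborel. (x::real^'d)$j \<notin> Nk (Suc k)" by simp
    qed simp
    thus "AE x in lborel. \<forall>j::'d. (x::real^'d)$j \<notin> Nk (Suc k)" by simp
  qed
  hence "AE x in lborel. 0 < ennreal (fX x) \<longrightarrow> x \<in> Gd"
  proof eventually_elim
    case (elim x)
    show ?case
    proof
      assume "0 < ennreal (fX x)"
      hence "x \<in> cube" using dens_out by (metis ennreal_0 less_irrefl)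
      thus "x \<in> Gd" using elim unfolding Gd_def cube_iff by auto
    qed
  qed
  hence "AE x in density lborel (\<lambda>x. ennreal (fX x)). x \<in> Gd" by (subst AE_density[OF fXm])
  hence "AE x in distr M lborel (X 0). x \<in> Gd" by (simp only: dist0)
  hence AE0: "AE \<omega> in M. X 0 \<omega> \<in> Gd" by (rule AE_distrD[OF X0lb])
  have snd_meas: "(snd :: real \<times> (real^'d) \<Rightarrow> real^'d) \<in> borel_measurable borel"
    by (intro borel_measurable_continuous_onI continuous_intros)
  have pair_meas[measurable]: "(\<lambda>\<omega>. (Y i \<omega>, X i \<omega>)) \<in> borel_measurable M" for i
    using rvY rvX by measurable
  have AEi: "AE \<omega> in M. X i \<omega> \<in> Gd" for i
  proof -
    define A where "A = {z :: real \<times> (real^'d). snd z \<notin> Gd}"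
    have Xm0: "{\<omega>\<in>space M. X 0 \<omega> \<notin> Gd} \<in> sets M" using rvX by measurable
    have Xmi: "{\<omega>\<in>space M. X i \<omega> \<notin> Gd} \<in> sets M" using rvX by measurable
    have Ab: "A \<in> sets borel" unfolding A_def using snd_meas Gd_meas by measurable
    have e: "(\<lambda>\<omega>. (Y j \<omega>, X j \<omega>)) -` A \<inter> space M = {\<omega>\<in>space M. X j \<omega> \<notin> Gd}" for j
      unfolding A_def by auto
    have "emeasure M {\<omega>\<in>space M. X i \<omega> \<notin> Gd} = emeasure (distr M borel (\<lambda>\<omega>. (Y i \<omega>, X i \<omega>))) A"
      by (subst emeasure_distr) (auto simp: Ab e)
    also have "\<dots> = emeasure (distr M borel (\<lambda>\<omega>. (Y 0 \<omega>, X 0 \<omega>))) A" by (simp only: ident[of i])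
    also have "\<dots> = emeasure M {\<omega>\<in>space M. X 0 \<omega> \<notin> Gd}"
      by (subst emeasure_distr) (auto simp: Ab e)
    also have "\<dots> = 0"
      using AE0 AE_iff_measurable[of "{\<omega>\<in>space M. X 0 \<omega> \<notin> Gd}" M "\<lambda>\<omega>. X 0 \<omega> \<in> Gd"] Xm0 by simp
    finally have "emeasure M {\<omega>\<in>space M. X i \<omega> \<notin> Gd} = 0" .
    thus ?thesis using AE_iff_measurable[of "{\<omega>\<in>space M. X i \<omega> \<notin> Gd}" M "\<lambda>\<omega>. X i \<omega> \<in> Gd"] Xmi by simp
  qed
  have AEall: "AE \<omega> in M. \<forall>i. X i \<omega> \<in> Gd" using AEi by (simp add: AE_all_countable)
  define Good where "Good = {\<omega>\<in>space M. \<forall>i. X i \<omega> \<in> Gd}"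
  have Good_meas: "Good \<in> sets M" unfolding Good_def using rvX by measurable
  have Good_prob: "measure M (space M - Good) = 0"
  proof -
    have "AE \<omega> in M. \<omega> \<in> Good" using AEall unfolding Good_def by (auto elim!: eventually_mono)
    then obtain N where "{\<omega>\<in>space M. \<omega> \<notin> Good} \<subseteq> N" "N \<in> null_sets M" by (auto elim!: AE_E simp: null_sets_def)
    hence "space M - Good \<in> null_sets M" using Good_meas by (auto intro: null_sets_subset)
    thus ?thesis by (simp add: measure_eq_0_null_sets)
  qed
  define H where "H = vimage_algebra (space M) (X 0) borel"
  have subH: "subalgebra M H" unfolding subalgebra_def H_def
    using sets_image_in_sets[OF refl rvX[of 0]] by auto
  have sfsH: "sigma_finite_subalgebra M H"
    by (rule finite_measure_subalgebra_is_sigma_finite) (unfold_locales, rule subH)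
  have HX: "(\<lambda>\<omega>. f (X 0 \<omega>)) \<in> borel_measurable H" if f: "f \<in> borel_measurable borel" for f :: "real^'d \<Rightarrow> real"
    unfolding H_def by (rule measurable_compose[OF measurable_vimage_algebra1 f]) auto
  define Gt where "Gt = (\<lambda>x. Ft (mmt x))"
  have Gt_meas[measurable]: "Gt \<in> borel_measurable borel" unfolding Gt_def by measurable
  have Xm[measurable]: "X i \<in> borel_measurable M" for i by (rule rvX)
  have Ym[measurable]: "Y i \<in> borel_measurable M" for i by (rule rvY)
  have Gint: "integrable M (\<lambda>\<omega>. Gt (X 0 \<omega>))"
    by (rule P.integrable_const_bound[where B=BF]) (auto simp: Gt_def BF)
  have Ueq: "AE \<omega> in M. Y 0 \<omega> - F (\<mu> + madd mj (X 0 \<omega>)) = Y 0 \<omega> - Gt (X 0 \<omega>)"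
    using AE0 by eventually_elim (simp add: gp_F Gt_def)
  have cm: "AE \<omega> in M. real_cond_exp M H (Y 0) \<omega> = Gt (X 0 \<omega>)"
    using AE0 cmean unfolding H_def by eventually_elim (simp add: gp_F Gt_def)
  have Wb: "AE \<omega> in M. V (X 0 \<omega>) \<le> C_V"
    using AE0 by eventually_elim (use V_bdd Gd_cube in blast)
  have CV: "AE \<omega> in M. real_cond_exp M H (\<lambda>\<omega>. (Y 0 \<omega> - Gt (X 0 \<omega>))^2) \<omega> \<le> 2*C_V"
   and CM: "AE \<omega> in M. real_cond_exp M H (\<lambda>\<omega>. Y 0 \<omega> - Gt (X 0 \<omega>)) \<omega> = 0"
    using cond_var_bound[OF sfsH intY HX[OF Gt_meas] Gint cm Ueq U2_int _ Wb] V_def unfolding H_def by auto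
  have T2int: "integrable M (\<lambda>\<omega>. (Y 0 \<omega> - Gt (X 0 \<omega>))^2)"
  proof -
    have "AE \<omega> in M. (Y 0 \<omega> - F (\<mu> + madd mj (X 0 \<omega>)))^2 = (Y 0 \<omega> - Gt (X 0 \<omega>))^2"
      using Ueq by eventually_elim simp
    moreover have "(\<lambda>\<omega>. (Y 0 \<omega> - Gt (X 0 \<omega>))^2) \<in> borel_measurable M" by measurable
    ultimately show ?thesis using integrable_cong_AE[OF borel_measurable_integrable[OF U2_int]] U2_int by blast
  qed
  have zero_cube: "(0::real^'d) \<in> cube" unfolding cube_iff by simp
  have CV0: "C_V \<ge> 0" using V_bdd(1) V_bdd(2)[OF zero_cube] by linarith
  define \<psi> where "\<psi> = (\<lambda>\<kappa>' a x. F't (mmt x) * Pe \<kappa>' a x)"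
  have \<psi>_meas[measurable]: "\<psi> \<kappa>' a \<in> borel_measurable borel" for \<kappa>' a unfolding \<psi>_def by measurable
  have coef: "integrable M (\<lambda>\<omega>. ((Y 0 \<omega> - Gt (X 0 \<omega>)) * \<psi> \<kappa>' a (X 0 \<omega>))^2) \<and>
      (\<integral>\<omega>. ((Y 0 \<omega> - Gt (X 0 \<omega>)) * \<psi> \<kappa>' a (X 0 \<omega>))^2 \<partial>M) \<le> 2*C_V*C_Q \<and>
      integrable M (\<lambda>\<omega>. (Y 0 \<omega> - Gt (X 0 \<omega>)) * \<psi> \<kappa>' a (X 0 \<omega>)) \<and>
      (\<integral>\<omega>. (Y 0 \<omega> - Gt (X 0 \<omega>)) * \<psi> \<kappa>' a (X 0 \<omega>) \<partial>M) = 0"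
    if a: "a < \<kappa>' * CARD('d) + 1" for \<kappa>' a
  proof -
    define Nd where "Nd = \<kappa>' * CARD('d) + 1"
    define Q where "Q = Qmat M (X 0) F' \<mu> mj p \<kappa>'"
    have Qc: "Q \<in> carrier_mat Nd Nd" unfolding Q_def Qmat_def Nd_def by simp
    have Qsym: "Q$$(i,j) = Q$$(j,i)" if "i < Nd" "j < Nd" for i j
      using that unfolding Q_def Qmat_def Nd_def by (simp add: mult_ac)
    have aN: "a < Nd" using a unfolding Nd_def by simp
    have "scalar_prod (unit_vec Nd a) (Q *\<^sub>v unit_vec Nd a) \<ge> min_eig Q * scalar_prod (unit_vec Nd a) (unit_vec Nd a)"
      by (rule rayleigh_eig[OF Qc _ Qsym]) (auto simp: Nd_def)
    moreover have "scalar_prod (unit_vec Nd a) (Q *\<^sub>v unit_vec Nd a) = Q$$(a,a)"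
      using Qc aN by (simp add: mult_mat_vec_def)
    moreover have "scalar_prod (unit_vec Nd a) (unit_vec Nd a) = (1::real)" using aN by simp
    ultimately have Qaa: "Q$$(a,a) > c_lam" using Q_eig(2)[of \<kappa>'] unfolding Q_def by simp
    define f where "f = (\<lambda>\<omega>. (F' (\<mu> + madd mj (X 0 \<omega>)))^2 * (Pvec p \<kappa>' (X 0 \<omega>) $ a) * (Pvec p \<kappa>' (X 0 \<omega>) $ a))"
    have Qf: "Q$$(a,a) = (\<integral>\<omega>. f \<omega> \<partial>M)" unfolding Q_def Qmat_def f_def using aN unfolding Nd_def by simp
    have intf: "integrable M f"
    proof (rule ccontr)
      assume "\<not> integrable M f"
      hence "(\<integral>\<omega>. f \<omega> \<partial>M) = 0" by (rule not_integrable_integral_eq)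
      thus False using Qaa Qf Q_eig(1) by simp
    qed
    have feq: "AE \<omega> in M. f \<omega> = (\<psi> \<kappa>' a (X 0 \<omega>))^2"
      using AE0
    proof eventually_elim
      case (elim \<omega>)
      show ?case using gp_F'[OF elim] gp_P[OF elim a] by (simp add: f_def \<psi>_def power2_eq_square mult_ac)
    qed
    have \<psi>m: "(\<lambda>\<omega>. (\<psi> \<kappa>' a (X 0 \<omega>))^2) \<in> borel_measurable M" by measurable
    have \<psi>2: "integrable M (\<lambda>\<omega>. (\<psi> \<kappa>' a (X 0 \<omega>))^2)"
      using integrable_cong_AE[OF borel_measurable_integrable[OF intf] \<psi>m feq] intf by blast
    have E\<psi>: "(\<integral>\<omega>. (\<psi> \<kappa>' a (X 0 \<omega>))^2 \<partial>M) \<le> C_Q"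
    proof -
      have "(\<integral>\<omega>. (\<psi> \<kappa>' a (X 0 \<omega>))^2 \<partial>M) = (\<integral>\<omega>. f \<omega> \<partial>M)"
        using feq by (intro integral_cong_AE) (auto simp: borel_measurable_integrable[OF intf])
      also have "\<dots> = Q$$(a,a)" by (simp add: Qf)
      also have "\<dots> \<le> C_Q" using Q_entries[OF a a] unfolding Q_def by simp
      finally show ?thesis .
    qed
    have Tm: "(\<lambda>\<omega>. Y 0 \<omega> - Gt (X 0 \<omega>)) \<in> borel_measurable M" by measurable
    note cmo = cond_moment[OF sfsH prob Tm T2int CV CM HX[OF \<psi>_meas] \<psi>2]
    have "(\<integral>\<omega>. ((Y 0 \<omega> - Gt (X 0 \<omega>)) * \<psi> \<kappa>' a (X 0 \<omega>))^2 \<partial>M) \<le> 2*C_V*(\<integral>\<omega>. (\<psi> \<kappa>' a (X 0 \<omega>))^2 \<partial>M)"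
      using cmo(2) by simp
    also have "\<dots> \<le> 2*C_V*C_Q" using E\<psi> CV0 by (intro mult_left_mono) auto
    finally show ?thesis using cmo(1,3,4) by simp
  qed
  have tr_int: "integrable M (\<lambda>\<omega>. f (Y i \<omega>, X i \<omega>)) \<longleftrightarrow> integrable M (\<lambda>\<omega>. f (Y 0 \<omega>, X 0 \<omega>))"
    if f: "f \<in> borel_measurable borel" for f :: "real \<times> (real^'d) \<Rightarrow> real" and i
    using integrable_distr_eq[OF pair_meas[of i] f] integrable_distr_eq[OF pair_meas[of 0] f] ident[of i] by simp
  have tr_E: "(\<integral>\<omega>. f (Y i \<omega>, X i \<omega>) \<partial>M) = (\<integral>\<omega>. f (Y 0 \<omega>, X 0 \<omega>) \<partial>M)"
    if f: "f \<in> borel_measurable borel" for f :: "real \<times> (real^'d) \<Rightarrow> real" and i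
    using integral_distr[OF pair_meas[of i] f] integral_distr[OF pair_meas[of 0] f] ident[of i] by simp
  define phi where "phi = (\<lambda>\<kappa>' a (z::real \<times> (real^'d)). (fst z - Gt (snd z)) * \<psi> \<kappa>' a (snd z))"
  have fst_meas: "(fst :: real \<times> (real^'d) \<Rightarrow> real) \<in> borel_measurable borel"
    by (intro borel_measurable_continuous_onI continuous_intros)
  have phi_meas[measurable]: "phi \<kappa>' a \<in> borel_measurable borel" for \<kappa>' a
  proof -
    have "(\<lambda>z::real \<times> (real^'d). Gt (snd z)) \<in> borel_measurable borel" by (rule measurable_compose[OF snd_meas Gt_meas])
    moreover have "(\<lambda>z::real \<times> (real^'d). \<psi> \<kappa>' a (snd z)) \<in> borel_measurable borel"
      by (rule measurable_compose[OF snd_meas \<psi>_meas])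
    ultimately show ?thesis unfolding phi_def using fst_meas by measurable
  qed
  have phi_sq_meas[measurable]: "(\<lambda>z. (phi \<kappa>' a z)^2) \<in> borel_measurable borel" for \<kappa>' a by measurable
  have sumvar: "integrable M (\<lambda>\<omega>. (\<Sum>i<n. phi \<kappa>' a (Y i \<omega>, X i \<omega>))^2) \<and>
     (\<integral>\<omega>. (\<Sum>i<n. phi \<kappa>' a (Y i \<omega>, X i \<omega>))^2 \<partial>M) \<le> real n * (2*C_V*C_Q)"
    if a: "a < \<kappa>' * CARD('d) + 1" for \<kappa>' a n
  proof -
    define W where "W = (\<lambda>i \<omega>. phi \<kappa>' a (Y i \<omega>, X i \<omega>))"
    have c: "integrable M (\<lambda>\<omega>. (W 0 \<omega>)^2)" "(\<integral>\<omega>. (W 0 \<omega>)^2 \<partial>M) \<le> 2*C_V*C_Q"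
       "integrable M (W 0)" "(\<integral>\<omega>. W 0 \<omega> \<partial>M) = 0"
      using coef[OF a] unfolding W_def phi_def by auto
    have indW: "P.indep_vars (\<lambda>_. borel) W UNIV"
      unfolding W_def by (rule P.indep_vars_compose2[OF indep]) (use phi_meas in auto)
    have int2: "integrable M (\<lambda>\<omega>. (W i \<omega>)^2)" for i
      using tr_int[OF phi_sq_meas, of \<kappa>' a i] c(1) unfolding W_def by simp
    have intW: "integrable M (W i)" for i
      using tr_int[OF phi_meas, of \<kappa>' a i] c(3) unfolding W_def by simp
    have m0: "(\<integral>\<omega>. W i \<omega> \<partial>M) = 0" for i
      using tr_E[OF phi_meas, of \<kappa>' a i] c(4) unfolding W_def by simp
    have e2: "(\<integral>\<omega>. (W i \<omega>)^2 \<partial>M) \<le> 2*C_V*C_Q" for i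
      using tr_E[OF phi_sq_meas, of \<kappa>' a i] c(2) unfolding W_def by simp
    note vs = var_sum_indep[OF prob indW int2 intW m0]
    have "(\<integral>\<omega>. (\<Sum>i<n. W i \<omega>)^2 \<partial>M) = (\<Sum>i<n. \<integral>\<omega>. (W i \<omega>)^2 \<partial>M)" by (rule vs(2))
    also have "\<dots> \<le> (\<Sum>i<n. 2*C_V*C_Q)" by (intro sum_mono e2)
    also have "\<dots> = real n * (2*C_V*C_Q)" by simp
    finally show ?thesis using vs(1) unfolding W_def by simp
  qed
  have CQ0: "C_Q \<ge> 0" using Q_entries[of 0 0 0] by simp
  have clam: "c_lam > 0" by (rule Q_eig(1))
  obtain N0 where N0: "\<And>n. n \<ge> N0 \<Longrightarrow> \<kappa> n \<ge> 1"
  proof -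
    define r where "r = 4/15 + \<nu>"
    have r0: "r > 0" unfolding r_def using nu by simp
    define b where "b = (1/C_kap) powr (1/r)"
    have b0: "b > 0" unfolding b_def using kappa(1) by simp
    define N0 where "N0 = nat \<lceil>b\<rceil>"
    have "\<kappa> n \<ge> 1" if n: "n \<ge> N0" for n
    proof -
      have "real n \<ge> b" using n unfolding N0_def by linarith
      hence "real n powr r \<ge> b powr r" using b0 r0 by (intro powr_mono2) auto
      also have "b powr r = 1/C_kap" unfolding b_def using r0 kappa(1) by (simp add: powr_powr)
      finally have "C_kap * real n powr r \<ge> 1" using kappa(1) by (simp add: field_simps)
      hence "\<lfloor>C_kap * real n powr r\<rfloor> \<ge> 1" by linarith
      thus ?thesis unfolding kappa(2) r_def by linarith
    qed
    thus ?thesis using that by blast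
  qed
  define T where "T = (\<lambda>n \<omega>. if min_eig (Qhat F' \<mu> mj p (\<kappa> n) X n \<omega>) \<ge> c_lam / 2
            then vnorm (the (mat_inverse (Qhat F' \<mu> mj p (\<kappa> n) X n \<omega>))
                   *\<^sub>v ((1 / real n) \<cdot>\<^sub>v (transpose_mat (Zmat F' \<mu> mj p (\<kappa> n) X n \<omega>)
                          *\<^sub>v Ubar F \<mu> mj Y X n \<omega>)))
            else 0)"
  define an where "an = (\<lambda>n. sqrt (real (\<kappa> n)) / sqrt (real n))"
  define K0 where "K0 = 8*C_V*C_Q*(real CARD('d)+1)/c_lam^2"
  have K00: "K0 \<ge> 0" unfolding K0_def using CV0 CQ0 by simp
  have step: "\<exists>A\<in>sets M. {\<omega>\<in>space M. \<bar>T n \<omega>\<bar> > C * an n} \<subseteq> A \<and> measure M A \<le> K0 / C^2"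
    if n1: "n \<ge> 1" and k1: "\<kappa> n \<ge> 1" and C0: "C > 0" for n C
  proof -
    define k where "k = \<kappa> n"
    define Nd where "Nd = k * CARD('d) + 1"
    define S where "S = (\<lambda>\<omega>. \<Sum>a<Nd. (1/real n)^2 * (\<Sum>i<n. phi k a (Y i \<omega>, X i \<omega>))^2)"
    have S_int: "integrable M S"
      unfolding S_def
    proof (intro Bochner_Integration.integrable_sum integrable_mult_right)
      fix a assume "a \<in> {..<Nd}"
      thus "integrable M (\<lambda>\<omega>. (\<Sum>i<n. phi k a (Y i \<omega>, X i \<omega>))^2)"
        using sumvar[of a k n] unfolding Nd_def by auto
    qed
    have ES: "(\<integral>\<omega>. S \<omega> \<partial>M) \<le> real Nd * (2*C_V*C_Q) / real n"
    proof -
      have "(\<integral>\<omega>. S \<omega> \<partial>M) = (\<Sum>a<Nd. (\<integral>\<omega>. (1/real n)^2 * (\<Sum>i<n. phi k a (Y i \<omega>, X i \<omega>))^2 \<partial>M))"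
        unfolding S_def using sumvar[of _ k n] unfolding Nd_def
        by (intro Bochner_Integration.integral_sum integrable_mult_right) auto
      also have "\<dots> = (\<Sum>a<Nd. (1/real n)^2 * (\<integral>\<omega>. (\<Sum>i<n. phi k a (Y i \<omega>, X i \<omega>))^2 \<partial>M))"
        by simp
      also have "\<dots> \<le> (\<Sum>a<Nd. (1/real n)^2 * (real n * (2*C_V*C_Q)))"
        using sumvar[of _ k n] unfolding Nd_def by (intro sum_mono mult_left_mono) auto
      also have "\<dots> = real Nd * (2*C_V*C_Q) / real n" using n1 by (simp add: power2_eq_square)
      finally show ?thesis .
    qed
    have S0: "S \<omega> \<ge> 0" for \<omega> unfolding S_def by (intro sum_nonneg) auto
    have Tbound: "\<bar>T n \<omega>\<bar> \<le> (2/c_lam) * sqrt (S \<omega>)" if \<omega>: "\<omega> \<in> Good" for \<omega>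
    proof -
      have XG: "X i \<omega> \<in> Gd" for i using \<omega> unfolding Good_def by auto
      define Z where "Z = Zmat F' \<mu> mj p k X n \<omega>"
      define U where "U = Ubar F \<mu> mj Y X n \<omega>"
      define v where "v = (1/real n) \<cdot>\<^sub>v (transpose_mat Z *\<^sub>v U)"
      define Qh where "Qh = Qhat F' \<mu> mj p k X n \<omega>"
      have Zc: "Z \<in> carrier_mat n Nd" unfolding Z_def Zmat_def Nd_def by simp
      have Uc: "U \<in> carrier_vec n" unfolding U_def Ubar_def by simp
      have vc: "v \<in> carrier_vec Nd" unfolding v_def using Zc Uc by simp
      have Qh_eq: "Qh = (1/real n) \<cdot>\<^sub>m (transpose_mat Z * Z)" unfolding Qh_def Z_def Qhat_def by simp
      have Qhc: "Qh \<in> carrier_mat Nd Nd" unfolding Qh_eq using Zc by simp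
      have Qsym: "Qh$$(i,j) = Qh$$(j,i)" if "i < Nd" "j < Nd" for i j
      proof -
        have "col Z i \<in> carrier_vec n" "col Z j \<in> carrier_vec n" using Zc by auto
        hence "scalar_prod (col Z i) (col Z j) = scalar_prod (col Z j) (col Z i)" by (rule comm_scalar_prod)
        thus ?thesis unfolding Qh_eq using that Zc by simp
      qed
      have Zi: "Z $$ (i,a) = \<psi> k a (X i \<omega>)" if "i < n" "a < Nd" for i a
        using that gp_F'[OF XG[of i]] gp_P[OF XG[of i], of a k] unfolding Z_def Zmat_def Nd_def \<psi>_def by simp
      have Ui: "U $ i = Y i \<omega> - Gt (X i \<omega>)" if "i < n" for i
        using that gp_F[OF XG[of i]] unfolding U_def Ubar_def Gt_def by simp
      have vi: "v $ a = (1/real n) * (\<Sum>i<n. phi k a (Y i \<omega>, X i \<omega>))" if a: "a < Nd" for a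
      proof -
        have "v $ a = (1/real n) * scalar_prod (col Z a) U"
          unfolding v_def using a Zc Uc by simp
        also have "scalar_prod (col Z a) U = (\<Sum>i<n. Z $$ (i,a) * U $ i)"
          using a Zc Uc by (simp add: scalar_prod_def atLeast0LessThan)
        also have "\<dots> = (\<Sum>i<n. phi k a (Y i \<omega>, X i \<omega>))"
          by (intro sum.cong refl) (simp add: Zi[OF _ a] Ui phi_def mult.commute)
        finally show ?thesis .
      qed
      have vn: "vnorm v = sqrt (S \<omega>)"
      proof -
        have "vnorm v = sqrt (\<Sum>a<Nd. (v $ a)^2)" unfolding vnorm_def using vc by simp
        also have "(\<Sum>a<Nd. (v $ a)^2) = S \<omega>"
          unfolding S_def by (intro sum.cong refl) (simp add: vi power_divide)
        finally show ?thesis .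
      qed
      have Tn: "T n \<omega> = (if min_eig Qh \<ge> c_lam / 2 then vnorm (the (mat_inverse Qh) *\<^sub>v v) else 0)"
        unfolding T_def Qh_def v_def Z_def U_def k_def by simp
      have vn0: "vnorm w \<ge> 0" for w unfolding vnorm_def by (simp add: sum_nonneg)
      show ?thesis
      proof (cases "min_eig Qh \<ge> c_lam / 2")
        case True
        have "vnorm (the (mat_inverse Qh) *\<^sub>v v) \<le> vnorm v / (c_lam / 2)"
          by (rule inv_bound[OF Qhc _ Qsym _ True vc]) (use clam in \<open>auto simp: Nd_def\<close>)
        thus ?thesis using True Tn vn vn0 by (simp add: field_simps)
      next
        case False
        have "0 \<le> (2/c_lam) * sqrt (S \<omega>)" using clam S0[of \<omega>] by simp
        thus ?thesis using False Tn by simp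
      qed
    qed
    define thr where "thr = (c_lam * C * an n / 2)^2"
    have an_pos: "an n > 0" unfolding an_def using n1 k1 by simp
    have thr0: "thr > 0" unfolding thr_def using clam C0 an_pos by simp
    define A where "A = (space M - Good) \<union> {\<omega>\<in>space M. S \<omega> \<ge> thr}"
    have Sm: "S \<in> borel_measurable M" using S_int by auto
    have A_meas: "A \<in> sets M" unfolding A_def using Good_meas Sm by measurable
    have sub: "{\<omega>\<in>space M. \<bar>T n \<omega>\<bar> > C * an n} \<subseteq> A"
    proof
      fix \<omega> assume \<omega>: "\<omega> \<in> {\<omega>\<in>space M. \<bar>T n \<omega>\<bar> > C * an n}"
      show "\<omega> \<in> A"
      proof (cases "\<omega> \<in> Good")
        case True
        have "C * an n < (2/c_lam) * sqrt (S \<omega>)" using \<omega> Tbound[OF True] by simp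
        hence "c_lam * C * an n / 2 < sqrt (S \<omega>)" using clam by (simp add: field_simps)
        moreover have "0 \<le> c_lam * C * an n / 2" using clam C0 an_pos by simp
        ultimately have "(c_lam * C * an n / 2)^2 \<le> (sqrt (S \<omega>))^2" by (intro power_mono) auto
        hence "thr \<le> S \<omega>" unfolding thr_def using S0[of \<omega>] by simp
        thus ?thesis using \<omega> unfolding A_def by auto
      next
        case False thus ?thesis using \<omega> unfolding A_def by auto
      qed
    qed
    have s1: "space M - Good \<in> sets M" using Good_meas by auto
    have s2: "{\<omega>\<in>space M. S \<omega> \<ge> thr} \<in> sets M" using Sm by measurable
    have "measure M A \<le> measure M (space M - Good) + measure M {\<omega>\<in>space M. S \<omega> \<ge> thr}"
      unfolding A_def by (rule measure_Un_le[OF s1 s2])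
    also have "\<dots> \<le> 0 + (\<integral>\<omega>. S \<omega> \<partial>M) / thr"
    proof -
      have "measure M {\<omega>\<in>space M. S \<omega> \<ge> thr} \<le> (\<integral>\<omega>. S \<omega> \<partial>M) / thr"
        by (rule integral_Markov_inequality_measure[OF S_int _ _ thr0, of "space M"]) (auto intro!: AE_I2 S0)
      thus ?thesis using Good_prob by linarith
    qed
    also have "\<dots> \<le> (real Nd * (2*C_V*C_Q) / real n) / thr"
      using divide_right_mono[OF ES, of thr] thr0 by simp
    also have "\<dots> \<le> K0 / C^2"
    proof -
      have an2: "(an n)^2 = real k / real n" unfolding an_def k_def using n1 by (simp add: power_divide)
      have thr_eq: "thr = c_lam^2 * C^2 * real k / (4 * real n)"
        unfolding thr_def by (simp add: power_mult_distrib power_divide an2)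
      have kp: "real k > 0" using k1 unfolding k_def by simp
      have np: "real n > 0" using n1 by simp
      have "(real Nd * (2*C_V*C_Q) / real n) / thr = 8*C_V*C_Q*real Nd / (c_lam^2 * C^2 * real k)"
        unfolding thr_eq using kp np clam C0 by (simp add: field_simps)
      also have "\<dots> \<le> 8*C_V*C_Q*((real CARD('d)+1) * real k) / (c_lam^2 * C^2 * real k)"
      proof (intro divide_right_mono mult_left_mono)
        show "real Nd \<le> (real CARD('d)+1) * real k" unfolding Nd_def using k1 unfolding k_def
          by (simp add: algebra_simps)
      qed (use CV0 CQ0 clam C0 k1 in auto)
      also have "\<dots> = K0 / C^2" unfolding K0_def using kp clam C0 by (simp add: field_simps)
      finally show ?thesis .
    qed
    finally show ?thesis using A_meas sub by blast
  qed
  have "bigOp M T an"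
    unfolding bigOp_def
  proof (intro allI impI)
    fix \<epsilon> :: real assume \<epsilon>: "\<epsilon> > 0"
    define C where "C = sqrt (2*K0/\<epsilon>) + 1"
    have KE: "2*K0/\<epsilon> \<ge> 0" using K00 \<epsilon> by simp
    hence "sqrt (2*K0/\<epsilon>) \<ge> 0" by simp
    hence C0: "C > 0" unfolding C_def by linarith
    have "C \<ge> sqrt (2*K0/\<epsilon>)" unfolding C_def by simp
    hence "C^2 \<ge> (sqrt (2*K0/\<epsilon>))^2" using C0 KE by (intro power_mono) auto
    hence "C^2 \<ge> 2*K0/\<epsilon>" using K00 \<epsilon> by simp
    hence "K0 \<le> C^2 * \<epsilon> / 2" using \<epsilon> by (simp add: field_simps)
    moreover have "\<epsilon> * C^2 > 0" using C0 \<epsilon> by simp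
    ultimately have "K0 < \<epsilon> * C^2" using mult.commute[of \<epsilon> "C^2"] by linarith
    hence KC: "K0 / C^2 < \<epsilon>" using C0 \<epsilon> by (simp add: field_simps)
    show "\<exists>C N. \<forall>n\<ge>N. \<exists>A\<in>sets M. {\<omega>\<in>space M. \<bar>T n \<omega>\<bar> > C * an n} \<subseteq> A \<and> measure M A < \<epsilon>"
    proof (intro exI[of _ C] exI[of _ "max N0 1"] allI impI)
      fix n assume n: "max N0 1 \<le> n"
      have n1: "n \<ge> 1" and k1: "\<kappa> n \<ge> 1" using n N0[of n] by auto
      obtain A where A: "A \<in> sets M" "{\<omega>\<in>space M. \<bar>T n \<omega>\<bar> > C * an n} \<subseteq> A" "measure M A \<le> K0 / C^2"
        using step[OF n1 k1 C0] by blast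
      have "measure M A < \<epsilon>" using A(3) KC by linarith
      thus "\<exists>A\<in>sets M. {\<omega>\<in>space M. \<bar>T n \<omega>\<bar> > C * an n} \<subseteq> A \<and> measure M A < \<epsilon>"
        using A(1,2) by blast
    qed
  qed
  thus ?thesis unfolding T_def an_def .
qed


end
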